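(* Assume $0<d<\tfrac12$. For integers $L\ge0$ define $A_L=\int_{L-1}^{L}e^{Z_H(s)}ds$ and $B_L=\int_{L-1}^{L}\int_{L-1}^{L}e^{Z_H(s)}e^{Z_H(t)}ds\,dt$. Then, as $L\to\infty$, $$\mathrm{cov}(A_L,A_0)\sim e\,\gamma_Z(L),\qquad \mathrm{cov}(A_0,B_L)\sim 2e^{3/2}\gamma_Z(L)\int_{-1}^0\int_{-1}^0 e^{\gamma_Z(s-u)}du\,ds,$$ $$\mathrm{cov}(B_0,B_L)\sim 4e^2\gamma_Z(L)\int_{-1}^0\int_{-1}^0\int_{-1}^0\int_{-1}^0 e^{\gamma_Z(s-t)}e^{\gamma_Z(u-v)}\,dv\,du\,dt\,ds.$$
   Context: $H=\tfrac12+d$, $c>0$, $B_H$ is a fractional Brownian motion with Hurst index $H$, and $Z_H(t)=B_H(ct)-B_H(ct-1)$, a stationary Gaussian process with mean $0$, variance $1$ and autocovariance $\gamma_Z(r)=\tfrac12\left[|cr+1|^{2H}-2|cr|^{2H}+|cr-1|^{2H}\right]$. *)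

theory Defs
  imports "HOL-Probability.Probability" "HOL-Library.Landau_Symbols"
begin

definition centered_gaussian_process ::
  "'a measure \<Rightarrow> (real \<Rightarrow> 'a \<Rightarrow> real) \<Rightarrow> (real \<Rightarrow> real \<Rightarrow> real) \<Rightarrow> bool" where
  "centered_gaussian_process M X K \<longleftrightarrow>
     prob_space M \<and> (\<forall>t. X t \<in> borel_measurable M) \<and>
     (\<forall>(T::real set) (a::real \<Rightarrow> real). finite T \<longrightarrow>
        (CLINT \<omega>|M. cis (\<Sum>t\<in>T. a t * X t \<omega>))
          = complex_of_real (exp (- (\<Sum>s\<in>T. \<Sum>t\<in>T. a s * a t * K s t) / 2)))"

definition fBm :: "'a measure \<Rightarrow> real \<Rightarrow> (real \<Rightarrow> 'a \<Rightarrow> real) \<Rightarrow> bool" where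
  "fBm M H B \<longleftrightarrow>
     centered_gaussian_process M B
       (\<lambda>s t. (\<bar>s\<bar> powr (2*H) + \<bar>t\<bar> powr (2*H) - \<bar>s - t\<bar> powr (2*H)) / 2) \<and>
     (\<lambda>(t, \<omega>). B t \<omega>) \<in> borel_measurable (lborel \<Otimes>\<^sub>M M)"

definition gammaZ :: "real \<Rightarrow> real \<Rightarrow> real \<Rightarrow> real" where
  "gammaZ H c r = (\<bar>c*r + 1\<bar> powr (2*H) - 2 * \<bar>c*r\<bar> powr (2*H) + \<bar>c*r - 1\<bar> powr (2*H)) / 2"

definition cov :: "'a measure \<Rightarrow> ('a \<Rightarrow> real) \<Rightarrow> ('a \<Rightarrow> real) \<Rightarrow> real" where
  "cov M X Y = (LINT \<omega>|M. X \<omega> * Y \<omega>) - (LINT \<omega>|M. X \<omega>) * (LINT \<omega>|M. Y \<omega>)"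

end

theory Submission
  imports Defs "HOL-Real_Asymp.Real_Asymp"
begin

lemma gauss_mgf:
  assumes gp: "centered_gaussian_process M X K" and fin: "finite T"
  shows "(\<integral>\<^sup>+\<omega>. ennreal (exp (\<Sum>t\<in>T. a t * X t \<omega>)) \<partial>M)
           = ennreal (exp ((\<Sum>s\<in>T. \<Sum>t\<in>T. a s * a t * K s t)/2))"
proof -
  interpret prob_space M using gp unfolding centered_gaussian_process_def by simp
  have Xm[measurable]: "\<And>t. X t \<in> borel_measurable M" using gp unfolding centered_gaussian_process_def by simp
  define Y where "Y \<omega> = (\<Sum>t\<in>T. a t * X t \<omega>)" for \<omega>
  define v where "v = (\<Sum>s\<in>T. \<Sum>t\<in>T. a s * a t * K s t)"
  have Ym[measurable]: "Y \<in> borel_measurable M" unfolding Y_def by measurable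
  have ch: "char (distr M borel Y) \<theta> = complex_of_real (exp (- (\<theta>^2 * v) / 2))" for \<theta>
  proof -
    have "char (distr M borel Y) \<theta> = (CLINT \<omega>|M. iexp (\<theta> * Y \<omega>))"
      by (simp add: char_def integral_distr)
    also have "\<dots> = (CLINT \<omega>|M. cis (\<Sum>t\<in>T. (\<theta> * a t) * X t \<omega>))"
      by (simp add: cis_conv_exp Y_def sum_distrib_left mult_ac)
    also have "\<dots> = complex_of_real (exp (- (\<Sum>s\<in>T. \<Sum>t\<in>T. (\<theta> * a s) * (\<theta> * a t) * K s t) / 2))"
      using gp fin unfolding centered_gaussian_process_def
      by (auto dest!: spec[where x=T] spec[where x="\<lambda>t. \<theta> * a t"])
    also have "(\<Sum>s\<in>T. \<Sum>t\<in>T. (\<theta> * a s) * (\<theta> * a t) * K s t) = \<theta>^2 * v"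
      by (simp add: v_def sum_distrib_left power2_eq_square mult_ac)
    finally show ?thesis .
  qed
  have rd: "real_distribution (distr M borel Y)" by (rule real_distribution_distr) simp
  have "norm (char (distr M borel Y) 1) \<le> 1" by (rule real_distribution.cmod_char_le_1[OF rd])
  hence "exp (- v / 2) \<le> 1" using ch[of 1] by simp
  hence v0: "v \<ge> 0" by simp
  define s where "s = sqrt v"
  define N where "N = distr std_normal_distribution borel (\<lambda>x. s * x)"
  interpret SN: real_distribution std_normal_distribution by (rule real_dist_normal_dist)
  have rdN: "real_distribution N" unfolding N_def by (rule SN.real_distribution_distr) simp
  have chN: "char N \<theta> = complex_of_real (exp (- (\<theta>^2 * v) / 2))" for \<theta>
  proof -
    have "char N \<theta> = char std_normal_distribution (\<theta> * s)"
      unfolding N_def char_def by (simp add: integral_distr mult.assoc)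
    also have "\<dots> = complex_of_real (exp (- (\<theta>^2 * v) / 2))"
      using v0 by (simp add: char_std_normal_distribution s_def power_mult_distrib)
    finally show ?thesis .
  qed
  have eq: "distr M borel Y = N"
    by (rule Levy_uniqueness[OF rd rdN]) (simp add: ch chN fun_eq_iff)
  have "(\<integral>\<^sup>+\<omega>. ennreal (exp (Y \<omega>)) \<partial>M) = (\<integral>\<^sup>+x. ennreal (exp x) \<partial>distr M borel Y)"
    by (simp add: nn_integral_distr)
  also have "\<dots> = (\<integral>\<^sup>+x. ennreal (exp (s * x)) \<partial>std_normal_distribution)"
    unfolding eq N_def by (simp add: nn_integral_distr)
  also have "\<dots> = (\<integral>\<^sup>+x. ennreal (std_normal_density x) * ennreal (exp (s * x)) \<partial>lborel)"
    by (simp add: nn_integral_density)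
  also have "\<dots> = (\<integral>\<^sup>+x. ennreal (exp (v/2)) * ennreal (normal_density s 1 x) \<partial>lborel)"
  proof (rule nn_integral_cong)
    fix x :: real
    have "std_normal_density x * exp (s * x) = exp (v/2) * normal_density s 1 x"
    proof -
      have ss: "s^2 = v" using v0 by (simp add: s_def)
      have "- x\<^sup>2 / 2 + s * x = v/2 + (-(x - s)\<^sup>2 / (2 * 1\<^sup>2))"
        using ss by (simp add: power2_eq_square field_simps)
      hence "exp (- x\<^sup>2 / 2) * exp (s * x) = exp (v/2) * exp (-(x - s)\<^sup>2 / (2 * 1\<^sup>2))"
        by (simp flip: exp_add)
      thus ?thesis by (simp add: normal_density_def std_normal_density_def)
    qed
    thus "ennreal (std_normal_density x) * ennreal (exp (s * x)) = ennreal (exp (v/2)) * ennreal (normal_density s 1 x)"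
      by (simp flip: ennreal_mult)
  qed
  also have "\<dots> = ennreal (exp (v/2)) * (\<integral>\<^sup>+x. ennreal (normal_density s 1 x) \<partial>lborel)"
    by (simp add: nn_integral_cmult)
  also have "(\<integral>\<^sup>+x. ennreal (normal_density s 1 x) \<partial>lborel) = 1"
    using prob_space.emeasure_space_1[OF prob_space_normal_density[where \<mu>=s and \<sigma>=1]]
    by (simp add: emeasure_density)
  finally show ?thesis by (simp add: Y_def v_def)
qed

lemma gauss_lin:
  fixes b :: "'i \<Rightarrow> real" and \<tau> :: "'i \<Rightarrow> real"
  assumes gp: "centered_gaussian_process M X K" and fin: "finite I"
  shows "(\<integral>\<^sup>+\<omega>. ennreal (exp (\<Sum>i\<in>I. b i * X (\<tau> i) \<omega>)) \<partial>M)
           = ennreal (exp ((\<Sum>i\<in>I. \<Sum>j\<in>I. b i * b j * K (\<tau> i) (\<tau> j))/2))"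
proof -
  define a where "a t = (\<Sum>i\<in>{i\<in>I. \<tau> i = t}. b i)" for t
  have 1: "(\<Sum>i\<in>I. b i * X (\<tau> i) \<omega>) = (\<Sum>t\<in>\<tau>`I. a t * X t \<omega>)" for \<omega>
  proof -
    have "(\<Sum>i\<in>I. b i * X (\<tau> i) \<omega>) = (\<Sum>t\<in>\<tau>`I. \<Sum>i\<in>{i\<in>I. \<tau> i = t}. b i * X (\<tau> i) \<omega>)"
      by (rule sum.image_gen[OF fin])
    also have "\<dots> = (\<Sum>t\<in>\<tau>`I. a t * X t \<omega>)"
      unfolding a_def sum_distrib_right by (intro sum.cong refl) auto
    finally show ?thesis .
  qed
  have 2: "(\<Sum>i\<in>I. \<Sum>j\<in>I. b i * b j * K (\<tau> i) (\<tau> j)) = (\<Sum>s\<in>\<tau>`I. \<Sum>t\<in>\<tau>`I. a s * a t * K s t)"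
  proof -
    have in1: "(\<Sum>j\<in>I. b i * b j * K (\<tau> i) (\<tau> j)) = (\<Sum>t\<in>\<tau>`I. b i * a t * K (\<tau> i) t)" for i
    proof -
      have "(\<Sum>j\<in>I. b i * b j * K (\<tau> i) (\<tau> j)) = (\<Sum>t\<in>\<tau>`I. \<Sum>j\<in>{j\<in>I. \<tau> j = t}. b i * b j * K (\<tau> i) (\<tau> j))"
        by (rule sum.image_gen[OF fin])
      also have "\<dots> = (\<Sum>t\<in>\<tau>`I. b i * a t * K (\<tau> i) t)"
        unfolding a_def sum_distrib_left sum_distrib_right by (intro sum.cong refl) auto
      finally show ?thesis .
    qed
    have "(\<Sum>i\<in>I. \<Sum>t\<in>\<tau>`I. b i * a t * K (\<tau> i) t) = (\<Sum>s\<in>\<tau>`I. \<Sum>i\<in>{i\<in>I. \<tau> i = s}. \<Sum>t\<in>\<tau>`I. b i * a t * K (\<tau> i) t)"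
      by (rule sum.image_gen[OF fin])
    also have "\<dots> = (\<Sum>s\<in>\<tau>`I. \<Sum>t\<in>\<tau>`I. a s * a t * K s t)"
    proof (intro sum.cong refl)
      fix s assume "s \<in> \<tau>`I"
      have "(\<Sum>i\<in>{i\<in>I. \<tau> i = s}. \<Sum>t\<in>\<tau>`I. b i * a t * K (\<tau> i) t)
          = (\<Sum>i\<in>{i\<in>I. \<tau> i = s}. \<Sum>t\<in>\<tau>`I. b i * (a t * K s t))"
        by (intro sum.cong refl) (auto simp: mult_ac)
      also have "\<dots> = (\<Sum>t\<in>\<tau>`I. a s * a t * K s t)"
        by (subst sum.swap) (simp add: a_def[of s] sum_distrib_right mult.assoc)
      finally show "(\<Sum>i\<in>{i\<in>I. \<tau> i = s}. \<Sum>t\<in>\<tau>`I. b i * a t * K (\<tau> i) t) = (\<Sum>t\<in>\<tau>`I. a s * a t * K s t)" .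
    qed
    finally show ?thesis by (simp add: in1)
  qed
  show ?thesis unfolding 1 2 by (rule gauss_mgf[OF gp]) (use fin in simp)
qed

locale fsetup =
  fixes M :: "'a measure" and B :: "real \<Rightarrow> 'a \<Rightarrow> real" and d c :: real
  assumes d0: "0 < d" and d1: "d < 1/2" and c0: "c > 0"
    and fbm: "fBm M (1/2 + d) B"
begin

definition Z where "Z t \<omega> = B (c*t) \<omega> - B (c*t - 1) \<omega>"
definition g where "g = gammaZ (1/2 + d) c"
definition Kf where "Kf s t = (\<bar>s\<bar> powr (2*(1/2+d)) + \<bar>t\<bar> powr (2*(1/2+d)) - \<bar>s - t\<bar> powr (2*(1/2+d))) / 2"

lemma gp: "centered_gaussian_process M B Kf"
  using fbm unfolding fBm_def Kf_def[abs_def] by simp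

lemma prob: "prob_space M" using gp unfolding centered_gaussian_process_def by simp

lemma Kf_comb: "Kf (c*u) (c * v) - Kf (c*u) (c * v-1) - Kf (c*u-1) (c * v) + Kf (c*u-1) (c * v-1) = g (u - v)"
proof -
  have e1: "c*u - (c * v - 1) = c*(u-v) + 1" and e2: "c*u - 1 - c * v = c*(u-v) - 1"
    and e3: "c*u - 1 - (c * v - 1) = c*(u-v)" and e4: "c*u - c * v = c*(u-v)" by (simp_all add: algebra_simps)
  show ?thesis unfolding Kf_def g_def gammaZ_def e1 e2 e3 e4 by (simp add: field_simps)
qed

lemma g_sym: "g (a - b) = g (b - a)"
proof -
  have "\<bar>c*(a-b) + 1\<bar> = \<bar>c*(b-a) - 1\<bar>" "\<bar>c*(a-b) - 1\<bar> = \<bar>c*(b-a) + 1\<bar>" "\<bar>c*(a-b)\<bar> = \<bar>c*(b-a)\<bar>"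
    by (simp_all add: abs_if algebra_simps)
  thus ?thesis unfolding g_def gammaZ_def by simp
qed

lemma g0: "g 0 = 1" unfolding g_def gammaZ_def by simp

lemma sum_bool_prod: "(\<Sum>p\<in>I \<times> (UNIV::bool set). f p) = (\<Sum>i\<in>I. f (i,True) + f (i,False))"
proof -
  have "(\<Sum>p\<in>I \<times> (UNIV::bool set). f p) = (\<Sum>(i,x)\<in>I \<times> (UNIV::bool set). f (i,x))" by simp
  also have "\<dots> = (\<Sum>i\<in>I. \<Sum>x\<in>(UNIV::bool set). f (i,x))" by (rule sum.cartesian_product[symmetric])
  finally show ?thesis by (simp add: UNIV_bool add.commute)
qed

lemma Z_mgf:
  fixes s :: "'i \<Rightarrow> real"
  assumes fin: "finite I"
  shows "(\<integral>\<^sup>+\<omega>. ennreal (exp (\<Sum>i\<in>I. Z (s i) \<omega>)) \<partial>M) = ennreal (exp ((\<Sum>i\<in>I. \<Sum>j\<in>I. g (s i - s j))/2))"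
proof -
  define bb :: "'i \<times> bool \<Rightarrow> real" where "bb p = (if snd p then 1 else -1)" for p
  define \<tau> :: "'i \<times> bool \<Rightarrow> real" where "\<tau> p = (if snd p then c * s (fst p) else c * s (fst p) - 1)" for p
  have fin2: "finite (I \<times> (UNIV :: bool set))" using fin by simp
  have 1: "(\<Sum>i\<in>I. Z (s i) \<omega>) = (\<Sum>p\<in>I \<times> UNIV. bb p * B (\<tau> p) \<omega>)" for \<omega>
    unfolding sum_bool_prod by (simp add: bb_def \<tau>_def Z_def)
  have 2: "(\<Sum>p\<in>I \<times> UNIV. \<Sum>q\<in>I \<times> UNIV. bb p * bb q * Kf (\<tau> p) (\<tau> q)) = (\<Sum>i\<in>I. \<Sum>j\<in>I. g (s i - s j))"
  proof -
    have "(\<Sum>p\<in>I \<times> UNIV. \<Sum>q\<in>I \<times> UNIV. bb p * bb q * Kf (\<tau> p) (\<tau> q))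
        = (\<Sum>i\<in>I. \<Sum>j\<in>I. Kf (c * s i) (c * s j) - Kf (c * s i) (c * s j-1) - Kf (c * s i-1) (c * s j) + Kf (c * s i-1) (c * s j-1))"
      unfolding sum_bool_prod
      by (simp add: bb_def \<tau>_def sum.distrib sum_subtractf algebra_simps)
    also have "\<dots> = (\<Sum>i\<in>I. \<Sum>j\<in>I. g (s i - s j))" by (simp add: Kf_comb)
    finally show ?thesis .
  qed
  show ?thesis unfolding 1 2[symmetric] by (rule gauss_lin[OF gp fin2])
qed

end

context fsetup begin

lemma Bm: "(\<lambda>(t,\<omega>). B t \<omega>) \<in> borel_measurable (lborel \<Otimes>\<^sub>M M)"
  using fbm unfolding fBm_def by simp

lemma Z_meas[measurable]:
  assumes [measurable]: "f \<in> borel_measurable N" "h \<in> measurable N M"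
  shows "(\<lambda>x. Z (f x) (h x)) \<in> borel_measurable N"
proof -
  have *: "(\<lambda>x. B (e x) (h x)) \<in> borel_measurable N" if [measurable]: "e \<in> borel_measurable N" for e
  proof -
    have "(\<lambda>x. (e x, h x)) \<in> measurable N (lborel \<Otimes>\<^sub>M M)" by measurable
    from measurable_compose[OF this Bm] show ?thesis by simp
  qed
  show ?thesis unfolding Z_def by (intro borel_measurable_diff *) measurable
qed

definition J :: "real \<Rightarrow> real set" where "J x = {x - 1<..<x}"

lemma J_sets[measurable]: "J x \<in> sets borel" unfolding J_def by simp

definition aa where "aa x \<omega> = (\<integral>\<^sup>+s. ennreal (indicator (J x) s * exp (Z s \<omega>)) \<partial>lborel)"

lemma aa_meas[measurable]: "aa x \<in> borel_measurable M"
  unfolding aa_def by measurable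


lemma swap:
  assumes "(\<lambda>(s,\<omega>). f s \<omega>) \<in> borel_measurable (lborel \<Otimes>\<^sub>M M)"
  shows "(\<integral>\<^sup>+\<omega>. (\<integral>\<^sup>+s. f s \<omega> \<partial>lborel) \<partial>M) = (\<integral>\<^sup>+s. (\<integral>\<^sup>+\<omega>. f s \<omega> \<partial>M) \<partial>lborel)"
proof -
  interpret prob_space M by (rule prob)
  interpret pair_sigma_finite lborel M by unfold_locales
  show ?thesis using Fubini'[OF assms] .
qed

lemma peel:
  assumes [measurable]: "W \<in> borel_measurable M" "R \<in> borel_measurable M"
  shows "(\<integral>\<^sup>+\<omega>. W \<omega> * aa x \<omega> * R \<omega> \<partial>M)
     = (\<integral>\<^sup>+s. (\<integral>\<^sup>+\<omega>. W \<omega> * ennreal (indicator (J x) s * exp (Z s \<omega>)) * R \<omega> \<partial>M) \<partial>lborel)"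
proof -
  have "W \<omega> * aa x \<omega> * R \<omega> = (\<integral>\<^sup>+s. W \<omega> * ennreal (indicator (J x) s * exp (Z s \<omega>)) * R \<omega> \<partial>lborel)" if \<omega>: "\<omega> \<in> space M" for \<omega>
  proof -
    have [measurable]: "(\<lambda>s. \<omega>) \<in> measurable lborel M" using \<omega> by simp
    have m: "(\<lambda>s. ennreal (indicator (J x) s * exp (Z s \<omega>))) \<in> borel_measurable lborel" by measurable
    have m2: "(\<lambda>s. ennreal (indicator (J x) s * exp (Z s \<omega>)) * R \<omega>) \<in> borel_measurable lborel" by measurable
    have "W \<omega> * aa x \<omega> * R \<omega> = W \<omega> * (aa x \<omega> * R \<omega>)" by (simp add: mult.assoc)
    also have "aa x \<omega> * R \<omega> = (\<integral>\<^sup>+s. ennreal (indicator (J x) s * exp (Z s \<omega>)) * R \<omega> \<partial>lborel)"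
      unfolding aa_def by (rule nn_integral_multc[OF m, symmetric])
    also have "W \<omega> * \<dots> = (\<integral>\<^sup>+s. W \<omega> * (ennreal (indicator (J x) s * exp (Z s \<omega>)) * R \<omega>) \<partial>lborel)"
      by (rule nn_integral_cmult[OF m2, symmetric])
    finally show ?thesis by (simp add: mult.assoc)
  qed
  hence "(\<integral>\<^sup>+\<omega>. W \<omega> * aa x \<omega> * R \<omega> \<partial>M) = (\<integral>\<^sup>+\<omega>. (\<integral>\<^sup>+s. W \<omega> * ennreal (indicator (J x) s * exp (Z s \<omega>)) * R \<omega> \<partial>lborel) \<partial>M)"
    by (intro nn_integral_cong) simp
  also have "\<dots> = (\<integral>\<^sup>+s. (\<integral>\<^sup>+\<omega>. W \<omega> * ennreal (indicator (J x) s * exp (Z s \<omega>)) * R \<omega> \<partial>M) \<partial>lborel)"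
    by (rule swap) measurable
  finally show ?thesis .
qed


lemma Z2: "(\<integral>\<^sup>+\<omega>. ennreal (exp (Z s \<omega> + Z t \<omega>)) \<partial>M) = ennreal (exp (1 + g (s - t)))"
proof -
  have "(\<integral>\<^sup>+\<omega>. ennreal (exp (\<Sum>i\<in>{0::nat,1}. Z ((\<lambda>i. if i = 0 then s else t) i) \<omega>)) \<partial>M)
     = ennreal (exp ((\<Sum>i\<in>{0::nat,1}. \<Sum>j\<in>{0::nat,1}. g ((\<lambda>i. if i = 0 then s else t) i - (\<lambda>i. if i = 0 then s else t) j))/2))"
    by (rule Z_mgf) simp
  thus ?thesis by (simp add: g0 g_sym[of t s] field_simps)
qed

lemma Z1: "(\<integral>\<^sup>+\<omega>. ennreal (exp (Z s \<omega>)) \<partial>M) = ennreal (exp (1/2))"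
proof -
  have "(\<integral>\<^sup>+\<omega>. ennreal (exp (\<Sum>i\<in>{0::nat}. Z ((\<lambda>i. s) i) \<omega>)) \<partial>M)
     = ennreal (exp ((\<Sum>i\<in>{0::nat}. \<Sum>j\<in>{0::nat}. g ((\<lambda>i. s) i - (\<lambda>i. s) j))/2))"
    by (rule Z_mgf) simp
  thus ?thesis by (simp add: g0)
qed

lemma Z3: "(\<integral>\<^sup>+\<omega>. ennreal (exp (Z s \<omega> + Z t \<omega> + Z u \<omega>)) \<partial>M) = ennreal (exp (3/2 + g (s - t) + g (s - u) + g (t - u)))"
proof -
  define f where "f i = (if i = (0::nat) then s else if i = 1 then t else u)" for i
  have "(\<integral>\<^sup>+\<omega>. ennreal (exp (\<Sum>i\<in>{0::nat,1,2}. Z (f i) \<omega>)) \<partial>M)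
     = ennreal (exp ((\<Sum>i\<in>{0::nat,1,2}. \<Sum>j\<in>{0::nat,1,2}. g (f i - f j))/2))"
    by (rule Z_mgf) simp
  moreover have "(\<Sum>i\<in>{0::nat,1,2}. Z (f i) \<omega>) = Z s \<omega> + Z t \<omega> + Z u \<omega>" for \<omega> by (simp add: f_def)
  moreover have "(\<Sum>i\<in>{0::nat,1,2}. \<Sum>j\<in>{0::nat,1,2}. g (f i - f j))/2 = 3/2 + g (s - t) + g (s - u) + g (t - u)"
    by (simp add: f_def g0 g_sym[of t s] g_sym[of u s] g_sym[of u t] field_simps)
  ultimately show ?thesis by simp
qed

lemma Z4: "(\<integral>\<^sup>+\<omega>. ennreal (exp (Z s \<omega> + Z t \<omega> + Z u \<omega> + Z v \<omega>)) \<partial>M)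
   = ennreal (exp (2 + g (s - t) + g (s - u) + g (s - v) + g (t - u) + g (t - v) + g (u - v)))"
proof -
  define f where "f i = (if i = (0::nat) then s else if i = 1 then t else if i = 2 then u else v)" for i
  have "(\<integral>\<^sup>+\<omega>. ennreal (exp (\<Sum>i\<in>{0::nat,1,2,3}. Z (f i) \<omega>)) \<partial>M)
     = ennreal (exp ((\<Sum>i\<in>{0::nat,1,2,3}. \<Sum>j\<in>{0::nat,1,2,3}. g (f i - f j))/2))"
    by (rule Z_mgf) simp
  moreover have "(\<Sum>i\<in>{0::nat,1,2,3}. Z (f i) \<omega>) = Z s \<omega> + Z t \<omega> + Z u \<omega> + Z v \<omega>" for \<omega> by (simp add: f_def)
  moreover have "(\<Sum>i\<in>{0::nat,1,2,3}. \<Sum>j\<in>{0::nat,1,2,3}. g (f i - f j))/2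
      = 2 + g (s - t) + g (s - u) + g (s - v) + g (t - u) + g (t - v) + g (u - v)"
    by (simp add: f_def g0 g_sym[of t s] g_sym[of u s] g_sym[of u t] g_sym[of v s] g_sym[of v t] g_sym[of v u] field_simps)
  ultimately show ?thesis by simp
qed

end

context fsetup begin

definition ff where "ff x s \<omega> = ennreal (indicator (J x) s * exp (Z s \<omega>))"

lemma ff_meas[measurable]:
  assumes [measurable]: "f \<in> borel_measurable N" "h \<in> measurable N M"
  shows "(\<lambda>z. ff x (f z) (h z)) \<in> borel_measurable N"
  unfolding ff_def by measurable

lemma em: "0 \<le> a \<Longrightarrow> 0 \<le> b \<Longrightarrow> ennreal a * ennreal b = ennreal (a * b)"
  by (simp add: ennreal_mult)

lemma Q1: "(\<integral>\<^sup>+\<omega>. ff x s \<omega> \<partial>M) = ennreal (indicator (J x) s * exp (1/2))"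
proof -
  have "(\<integral>\<^sup>+\<omega>. ff x s \<omega> \<partial>M) = (\<integral>\<^sup>+\<omega>. ennreal (indicator (J x) s) * ennreal (exp (Z s \<omega>)) \<partial>M)"
    unfolding ff_def by (simp add: em)
  also have "\<dots> = ennreal (indicator (J x) s) * (\<integral>\<^sup>+\<omega>. ennreal (exp (Z s \<omega>)) \<partial>M)"
    by (rule nn_integral_cmult) measurable
  finally show ?thesis by (simp add: Z1 em)
qed

lemma Q2: "(\<integral>\<^sup>+\<omega>. ff x s \<omega> * ff y t \<omega> \<partial>M) = ennreal (indicator (J x) s * indicator (J y) t * exp (1 + g (s - t)))"
proof -
  have "(\<integral>\<^sup>+\<omega>. ff x s \<omega> * ff y t \<omega> \<partial>M) = (\<integral>\<^sup>+\<omega>. ennreal (indicator (J x) s * indicator (J y) t) * ennreal (exp (Z s \<omega> + Z t \<omega>)) \<partial>M)"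
    unfolding ff_def by (simp add: em exp_add mult_ac)
  also have "\<dots> = ennreal (indicator (J x) s * indicator (J y) t) * (\<integral>\<^sup>+\<omega>. ennreal (exp (Z s \<omega> + Z t \<omega>)) \<partial>M)"
    by (rule nn_integral_cmult) measurable
  finally show ?thesis by (simp add: Z2 em)
qed

lemma Q3: "(\<integral>\<^sup>+\<omega>. ff x s \<omega> * ff y t \<omega> * ff y u \<omega> \<partial>M) =
   ennreal (indicator (J x) s * indicator (J y) t * indicator (J y) u * exp (3/2 + g (s - t) + g (s - u) + g (t - u)))"
proof -
  have "(\<integral>\<^sup>+\<omega>. ff x s \<omega> * ff y t \<omega> * ff y u \<omega> \<partial>M) = (\<integral>\<^sup>+\<omega>. ennreal (indicator (J x) s * indicator (J y) t * indicator (J y) u) * ennreal (exp (Z s \<omega> + Z t \<omega> + Z u \<omega>)) \<partial>M)"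
    unfolding ff_def by (simp add: em exp_add mult_ac)
  also have "\<dots> = ennreal (indicator (J x) s * indicator (J y) t * indicator (J y) u) * (\<integral>\<^sup>+\<omega>. ennreal (exp (Z s \<omega> + Z t \<omega> + Z u \<omega>)) \<partial>M)"
    by (rule nn_integral_cmult) measurable
  finally show ?thesis by (simp add: Z3 em)
qed

lemma Q4: "(\<integral>\<^sup>+\<omega>. ff x s \<omega> * ff x t \<omega> * ff y u \<omega> * ff y v \<omega> \<partial>M) =
   ennreal (indicator (J x) s * indicator (J x) t * indicator (J y) u * indicator (J y) v *
     exp (2 + g (s - t) + g (s - u) + g (s - v) + g (t - u) + g (t - v) + g (u - v)))"
proof -
  have "(\<integral>\<^sup>+\<omega>. ff x s \<omega> * ff x t \<omega> * ff y u \<omega> * ff y v \<omega> \<partial>M) = (\<integral>\<^sup>+\<omega>. ennreal (indicator (J x) s * indicator (J x) t * indicator (J y) u * indicator (J y) v) * ennreal (exp (Z s \<omega> + Z t \<omega> + Z u \<omega> + Z v \<omega>)) \<partial>M)"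
    unfolding ff_def by (simp add: em exp_add mult_ac)
  also have "\<dots> = ennreal (indicator (J x) s * indicator (J x) t * indicator (J y) u * indicator (J y) v) * (\<integral>\<^sup>+\<omega>. ennreal (exp (Z s \<omega> + Z t \<omega> + Z u \<omega> + Z v \<omega>)) \<partial>M)"
    by (rule nn_integral_cmult) measurable
  finally show ?thesis by (simp add: Z4 em)
qed

end

context fsetup begin

lemma aa_ff: "aa x \<omega> = (\<integral>\<^sup>+s. ff x s \<omega> \<partial>lborel)" unfolding aa_def ff_def ..

lemma peel':
  assumes [measurable]: "W \<in> borel_measurable M" "R \<in> borel_measurable M"
  shows "(\<integral>\<^sup>+\<omega>. W \<omega> * aa x \<omega> * R \<omega> \<partial>M) = (\<integral>\<^sup>+s. (\<integral>\<^sup>+\<omega>. W \<omega> * ff x s \<omega> * R \<omega> \<partial>M) \<partial>lborel)"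
  unfolding ff_def by (rule peel) (simp_all add: assms)

lemma P1: "(\<integral>\<^sup>+\<omega>. aa x \<omega> \<partial>M) = (\<integral>\<^sup>+s. (\<integral>\<^sup>+\<omega>. ff x s \<omega> \<partial>M) \<partial>lborel)"
proof -
  have "(\<integral>\<^sup>+\<omega>. aa x \<omega> \<partial>M) = (\<integral>\<^sup>+\<omega>. 1 * aa x \<omega> * 1 \<partial>M)" by simp
  also have "\<dots> = (\<integral>\<^sup>+s. (\<integral>\<^sup>+\<omega>. 1 * ff x s \<omega> * 1 \<partial>M) \<partial>lborel)" by (rule peel') measurable
  finally show ?thesis by simp
qed

lemma P2: "(\<integral>\<^sup>+\<omega>. aa x \<omega> * aa y \<omega> \<partial>M) = (\<integral>\<^sup>+s. \<integral>\<^sup>+t. (\<integral>\<^sup>+\<omega>. ff x s \<omega> * ff y t \<omega> \<partial>M) \<partial>lborel \<partial>lborel)"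
proof -
  have "(\<integral>\<^sup>+\<omega>. aa x \<omega> * aa y \<omega> \<partial>M) = (\<integral>\<^sup>+\<omega>. 1 * aa x \<omega> * aa y \<omega> \<partial>M)" by simp
  also have "\<dots> = (\<integral>\<^sup>+s. (\<integral>\<^sup>+\<omega>. 1 * ff x s \<omega> * aa y \<omega> \<partial>M) \<partial>lborel)" by (rule peel') measurable
  also have "\<dots> = (\<integral>\<^sup>+s. \<integral>\<^sup>+t. (\<integral>\<^sup>+\<omega>. ff x s \<omega> * ff y t \<omega> \<partial>M) \<partial>lborel \<partial>lborel)"
  proof (rule nn_integral_cong)
    fix s
    have "(\<integral>\<^sup>+\<omega>. 1 * ff x s \<omega> * aa y \<omega> \<partial>M) = (\<integral>\<^sup>+\<omega>. ff x s \<omega> * aa y \<omega> * 1 \<partial>M)" by simp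
    also have "\<dots> = (\<integral>\<^sup>+t. (\<integral>\<^sup>+\<omega>. ff x s \<omega> * ff y t \<omega> * 1 \<partial>M) \<partial>lborel)" by (rule peel') measurable
    finally show "(\<integral>\<^sup>+\<omega>. 1 * ff x s \<omega> * aa y \<omega> \<partial>M) = (\<integral>\<^sup>+t. (\<integral>\<^sup>+\<omega>. ff x s \<omega> * ff y t \<omega> \<partial>M) \<partial>lborel)" by simp
  qed
  finally show ?thesis .
qed

lemma P3: "(\<integral>\<^sup>+\<omega>. aa x \<omega> * aa y \<omega> * aa y \<omega> \<partial>M) =
  (\<integral>\<^sup>+s. \<integral>\<^sup>+t. \<integral>\<^sup>+u. (\<integral>\<^sup>+\<omega>. ff x s \<omega> * ff y t \<omega> * ff y u \<omega> \<partial>M) \<partial>lborel \<partial>lborel \<partial>lborel)"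
proof -
  have "(\<integral>\<^sup>+\<omega>. aa x \<omega> * aa y \<omega> * aa y \<omega> \<partial>M) = (\<integral>\<^sup>+\<omega>. 1 * aa x \<omega> * (aa y \<omega> * aa y \<omega>) \<partial>M)" by (simp add: mult_ac)
  also have "\<dots> = (\<integral>\<^sup>+s. (\<integral>\<^sup>+\<omega>. 1 * ff x s \<omega> * (aa y \<omega> * aa y \<omega>) \<partial>M) \<partial>lborel)" by (rule peel') measurable
  also have "\<dots> = (\<integral>\<^sup>+s. \<integral>\<^sup>+t. \<integral>\<^sup>+u. (\<integral>\<^sup>+\<omega>. ff x s \<omega> * ff y t \<omega> * ff y u \<omega> \<partial>M) \<partial>lborel \<partial>lborel \<partial>lborel)"
  proof (rule nn_integral_cong)
    fix s
    have "(\<integral>\<^sup>+\<omega>. 1 * ff x s \<omega> * (aa y \<omega> * aa y \<omega>) \<partial>M) = (\<integral>\<^sup>+\<omega>. ff x s \<omega> * aa y \<omega> * aa y \<omega> \<partial>M)" by (simp add: mult_ac)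
    also have "\<dots> = (\<integral>\<^sup>+t. (\<integral>\<^sup>+\<omega>. ff x s \<omega> * ff y t \<omega> * aa y \<omega> \<partial>M) \<partial>lborel)" by (rule peel') measurable
    also have "\<dots> = (\<integral>\<^sup>+t. \<integral>\<^sup>+u. (\<integral>\<^sup>+\<omega>. ff x s \<omega> * ff y t \<omega> * ff y u \<omega> \<partial>M) \<partial>lborel \<partial>lborel)"
    proof (rule nn_integral_cong)
      fix t
      have "(\<integral>\<^sup>+\<omega>. ff x s \<omega> * ff y t \<omega> * aa y \<omega> \<partial>M) = (\<integral>\<^sup>+\<omega>. (ff x s \<omega> * ff y t \<omega>) * aa y \<omega> * 1 \<partial>M)" by simp
      also have "\<dots> = (\<integral>\<^sup>+u. (\<integral>\<^sup>+\<omega>. (ff x s \<omega> * ff y t \<omega>) * ff y u \<omega> * 1 \<partial>M) \<partial>lborel)" by (rule peel') measurable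
      finally show "(\<integral>\<^sup>+\<omega>. ff x s \<omega> * ff y t \<omega> * aa y \<omega> \<partial>M) = (\<integral>\<^sup>+u. (\<integral>\<^sup>+\<omega>. ff x s \<omega> * ff y t \<omega> * ff y u \<omega> \<partial>M) \<partial>lborel)" by simp
    qed
    finally show "(\<integral>\<^sup>+\<omega>. 1 * ff x s \<omega> * (aa y \<omega> * aa y \<omega>) \<partial>M) = (\<integral>\<^sup>+t. \<integral>\<^sup>+u. (\<integral>\<^sup>+\<omega>. ff x s \<omega> * ff y t \<omega> * ff y u \<omega> \<partial>M) \<partial>lborel \<partial>lborel)" .
  qed
  finally show ?thesis .
qed

lemma P4: "(\<integral>\<^sup>+\<omega>. aa x \<omega> * aa x \<omega> * aa y \<omega> * aa y \<omega> \<partial>M) =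
  (\<integral>\<^sup>+s. \<integral>\<^sup>+t. \<integral>\<^sup>+u. \<integral>\<^sup>+v. (\<integral>\<^sup>+\<omega>. ff x s \<omega> * ff x t \<omega> * ff y u \<omega> * ff y v \<omega> \<partial>M) \<partial>lborel \<partial>lborel \<partial>lborel \<partial>lborel)"
proof -
  have "(\<integral>\<^sup>+\<omega>. aa x \<omega> * aa x \<omega> * aa y \<omega> * aa y \<omega> \<partial>M) = (\<integral>\<^sup>+\<omega>. 1 * aa x \<omega> * (aa x \<omega> * aa y \<omega> * aa y \<omega>) \<partial>M)" by (simp add: mult_ac)
  also have "\<dots> = (\<integral>\<^sup>+s. (\<integral>\<^sup>+\<omega>. 1 * ff x s \<omega> * (aa x \<omega> * aa y \<omega> * aa y \<omega>) \<partial>M) \<partial>lborel)" by (rule peel') measurable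
  also have "\<dots> = (\<integral>\<^sup>+s. \<integral>\<^sup>+t. \<integral>\<^sup>+u. \<integral>\<^sup>+v. (\<integral>\<^sup>+\<omega>. ff x s \<omega> * ff x t \<omega> * ff y u \<omega> * ff y v \<omega> \<partial>M) \<partial>lborel \<partial>lborel \<partial>lborel \<partial>lborel)"
  proof (rule nn_integral_cong)
    fix s
    have "(\<integral>\<^sup>+\<omega>. 1 * ff x s \<omega> * (aa x \<omega> * aa y \<omega> * aa y \<omega>) \<partial>M) = (\<integral>\<^sup>+\<omega>. ff x s \<omega> * aa x \<omega> * (aa y \<omega> * aa y \<omega>) \<partial>M)" by (simp add: mult_ac)
    also have "\<dots> = (\<integral>\<^sup>+t. (\<integral>\<^sup>+\<omega>. ff x s \<omega> * ff x t \<omega> * (aa y \<omega> * aa y \<omega>) \<partial>M) \<partial>lborel)" by (rule peel') measurable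
    also have "\<dots> = (\<integral>\<^sup>+t. \<integral>\<^sup>+u. \<integral>\<^sup>+v. (\<integral>\<^sup>+\<omega>. ff x s \<omega> * ff x t \<omega> * ff y u \<omega> * ff y v \<omega> \<partial>M) \<partial>lborel \<partial>lborel \<partial>lborel)"
    proof (rule nn_integral_cong)
      fix t
      have "(\<integral>\<^sup>+\<omega>. ff x s \<omega> * ff x t \<omega> * (aa y \<omega> * aa y \<omega>) \<partial>M) = (\<integral>\<^sup>+\<omega>. (ff x s \<omega> * ff x t \<omega>) * aa y \<omega> * aa y \<omega> \<partial>M)" by (simp add: mult_ac)
      also have "\<dots> = (\<integral>\<^sup>+u. (\<integral>\<^sup>+\<omega>. (ff x s \<omega> * ff x t \<omega>) * ff y u \<omega> * aa y \<omega> \<partial>M) \<partial>lborel)" by (rule peel') measurable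
      also have "\<dots> = (\<integral>\<^sup>+u. \<integral>\<^sup>+v. (\<integral>\<^sup>+\<omega>. ff x s \<omega> * ff x t \<omega> * ff y u \<omega> * ff y v \<omega> \<partial>M) \<partial>lborel \<partial>lborel)"
      proof (rule nn_integral_cong)
        fix u
        have "(\<integral>\<^sup>+\<omega>. (ff x s \<omega> * ff x t \<omega>) * ff y u \<omega> * aa y \<omega> \<partial>M) = (\<integral>\<^sup>+\<omega>. (ff x s \<omega> * ff x t \<omega> * ff y u \<omega>) * aa y \<omega> * 1 \<partial>M)" by simp
        also have "\<dots> = (\<integral>\<^sup>+v. (\<integral>\<^sup>+\<omega>. (ff x s \<omega> * ff x t \<omega> * ff y u \<omega>) * ff y v \<omega> * 1 \<partial>M) \<partial>lborel)" by (rule peel') measurable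
        finally show "(\<integral>\<^sup>+\<omega>. (ff x s \<omega> * ff x t \<omega>) * ff y u \<omega> * aa y \<omega> \<partial>M) = (\<integral>\<^sup>+v. (\<integral>\<^sup>+\<omega>. ff x s \<omega> * ff x t \<omega> * ff y u \<omega> * ff y v \<omega> \<partial>M) \<partial>lborel)" by simp
      qed
      finally show "(\<integral>\<^sup>+\<omega>. ff x s \<omega> * ff x t \<omega> * (aa y \<omega> * aa y \<omega>) \<partial>M) = (\<integral>\<^sup>+u. \<integral>\<^sup>+v. (\<integral>\<^sup>+\<omega>. ff x s \<omega> * ff x t \<omega> * ff y u \<omega> * ff y v \<omega> \<partial>M) \<partial>lborel \<partial>lborel)" .
    qed
    finally show "(\<integral>\<^sup>+\<omega>. 1 * ff x s \<omega> * (aa x \<omega> * aa y \<omega> * aa y \<omega>) \<partial>M) = (\<integral>\<^sup>+t. \<integral>\<^sup>+u. \<integral>\<^sup>+v. (\<integral>\<^sup>+\<omega>. ff x s \<omega> * ff x t \<omega> * ff y u \<omega> * ff y v \<omega> \<partial>M) \<partial>lborel \<partial>lborel \<partial>lborel)" .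
  qed
  finally show ?thesis .
qed

end

lemma sd_bounds:
  fixes p y :: real assumes p1: "1 < p" and p2: "p < 2" and y1: "y > 1"
  shows "p*(p-1)*(y+1) powr (p-2) \<le> (y+1) powr p - 2 * y powr p + (y-1) powr p \<and>
         (y+1) powr p - 2 * y powr p + (y-1) powr p \<le> p*(p-1)*(y-1) powr (p-2)"
proof -
  define D where "D m = (if m = 0 then (\<lambda>t. (y+t) powr p + (y-t) powr p)
     else if m = 1 then (\<lambda>t. p*(y+t) powr (p-1) - p*(y-t) powr (p-1))
     else (\<lambda>t. p*(p-1)*(y+t) powr (p-2) + p*(p-1)*(y-t) powr (p-2)))" for m :: nat
  have der: "DERIV (D m) t :> D (Suc m) t" if m2: "m < 2" and t0: "0 \<le> t" and t1: "t \<le> 1" for m t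
  proof -
    have pos: "y + t > 0" "y - t > 0" using t0 t1 y1 by auto
    consider "m = 0" | "m = 1" using m2 by linarith
    thus ?thesis
    proof cases
      case 1
      show ?thesis unfolding 1 D_def using pos
        by (auto intro!: derivative_eq_intros)
    next
      case 2
      have "p - 1 - 1 = p - 2" by simp
      show ?thesis unfolding 2 D_def using pos
        by (auto intro!: derivative_eq_intros simp: algebra_simps)
    qed
  qed
  obtain t where t: "0 < t" "t < 1"
    and eq: "D 0 1 = (\<Sum>m<2. D m 0 / fact m * 1 ^ m) + D 2 t / fact 2 * 1 ^ 2"
    using Maclaurin[of 1 2 D "D 0"] der by auto
  define S where "S = (y+t) powr (p-2) + (y-t) powr (p-2)"
  define K where "K = p*(p-1)/2"
  have D: "(y+1) powr p - 2 * y powr p + (y-1) powr p = K * S"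
    using eq by (simp add: D_def S_def K_def numeral_2_eq_2 field_simps)
  have "(y+1) powr (p-2) \<le> (y+t) powr (p-2)" "(y+t) powr (p-2) \<le> (y-1) powr (p-2)"
    "(y+1) powr (p-2) \<le> (y-t) powr (p-2)" "(y-t) powr (p-2) \<le> (y-1) powr (p-2)"
    using t y1 p2 by (auto intro!: powr_mono2')
  hence S: "2 * (y+1) powr (p-2) \<le> S" "S \<le> 2 * (y-1) powr (p-2)" unfolding S_def by linarith+
  have K0: "K \<ge> 0" using p1 by (simp add: K_def)
  have "K * (2 * (y+1) powr (p-2)) \<le> K * S" by (rule mult_left_mono[OF S(1) K0])
  moreover have "K * S \<le> K * (2 * (y-1) powr (p-2))" by (rule mult_left_mono[OF S(2) K0])
  ultimately show ?thesis unfolding D by (simp add: K_def)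
qed

lemma ratio_lim:
  fixes c \<alpha> \<beta> q :: real assumes c: "c > 0"
  shows "((\<lambda>x. (c*x+\<alpha>) powr q / (c*x+\<beta>) powr q) \<longlongrightarrow> 1) at_top"
proof -
  have ev: "eventually (\<lambda>x. ((c*x+\<alpha>)/(c*x+\<beta>)) powr q = (c*x+\<alpha>) powr q / (c*x+\<beta>) powr q) at_top"
  proof -
    have "filterlim (\<lambda>x. c*x+\<alpha>) at_top at_top" "filterlim (\<lambda>x. c*x+\<beta>) at_top at_top"
      using c by real_asymp+
    hence "eventually (\<lambda>x. c*x+\<alpha> > 0) at_top" "eventually (\<lambda>x. c*x+\<beta> > 0) at_top"
      unfolding filterlim_at_top_dense by auto
    hence "eventually (\<lambda>x. c*x+\<alpha> > 0 \<and> c*x+\<beta> > 0) at_top" by (rule eventually_conj)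
    thus ?thesis by eventually_elim (simp add: powr_divide)
  qed
  have "((\<lambda>x. (c*x+\<alpha>)/(c*x+\<beta>)) \<longlongrightarrow> 1) at_top" using c by real_asymp
  hence "((\<lambda>x. ((c*x+\<alpha>)/(c*x+\<beta>)) powr q) \<longlongrightarrow> 1 powr q) at_top"
    by (intro tendsto_powr) auto
  thus ?thesis using ev by (simp add: tendsto_cong)
qed

lemma zero_lim:
  fixes c \<alpha> q :: real assumes c: "c > 0" and q: "q < 0"
  shows "((\<lambda>x. (c*x+\<alpha>) powr q) \<longlongrightarrow> 0) at_top"
proof -
  have "filterlim (\<lambda>x. c*x+\<alpha>) at_top at_top" using c by real_asymp
  thus ?thesis by (rule tendsto_neg_powr[OF q])
qed


lemma gam_bounds:
  fixes d c r :: real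
  assumes d0: "0 < d" and d1: "d < 1/2" and cr: "c * r > 1"
  shows "d*(1+2*d) * (c*r+1) powr (2*d-1) \<le> gammaZ (1/2+d) c r \<and>
         gammaZ (1/2+d) c r \<le> d*(1+2*d) * (c*r-1) powr (2*d-1)"
proof -
  have sd: "(1+2*d)*((1+2*d)-1)*(c*r+1) powr ((1+2*d)-2) \<le> (c*r+1) powr (1+2*d) - 2 * (c*r) powr (1+2*d) + (c*r-1) powr (1+2*d) \<and>
         (c*r+1) powr (1+2*d) - 2 * (c*r) powr (1+2*d) + (c*r-1) powr (1+2*d) \<le> (1+2*d)*((1+2*d)-1)*(c*r-1) powr ((1+2*d)-2)"
    by (rule sd_bounds) (use d0 d1 cr in auto)
  have e: "2*(1/2+d) = 1+2*d" "(1+2*d)-2 = 2*d-1" "(1+2*d)-1 = 2*d" by simp_all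
  have a: "\<bar>c*r+1\<bar> = c*r+1" "\<bar>c*r\<bar> = c*r" "\<bar>c*r-1\<bar> = c*r-1" using cr by auto
  show ?thesis using sd unfolding gammaZ_def a e by (simp add: field_simps)
qed

lemma real_lim: "((h::real\<Rightarrow>real) \<longlongrightarrow> l) at_top \<Longrightarrow> ((\<lambda>n::nat. h (real n)) \<longlongrightarrow> l) sequentially"
  by (rule filterlim_compose[OF _ filterlim_real_sequentially])

lemma key_lim:
  fixes k K q c \<alpha> :: real and G :: "nat \<Rightarrow> real"
  assumes k: "k > 0" and K: "K > 0" and q: "q < 0" and c: "c > 0"
    and ev: "eventually (\<lambda>n. K*(c*real n+1) powr q \<le> G n \<and> G n \<le> K*(c*real n-1) powr q) sequentially"
  shows "((\<lambda>n. (exp (k*(K*(c*real n+\<alpha>) powr q)) - 1)/(k*G n)) \<longlongrightarrow> 1) sequentially"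
proof -
  define f where "f x = K*(c*x+\<alpha>) powr q" for x
  define gl where "gl x = K*(c*x+1) powr q" for x
  define gu where "gu x = K*(c*x-1) powr q" for x
  have l1: "((\<lambda>x. f x / gu x) \<longlongrightarrow> 1) at_top"
    using ratio_lim[OF c, of \<alpha> q "-1"] K by (simp add: f_def gu_def)
  have l2: "((\<lambda>x. f x / gl x * exp (k * f x)) \<longlongrightarrow> 1 * exp (k * 0)) at_top"
  proof (intro tendsto_intros)
    show "((\<lambda>x. f x / gl x) \<longlongrightarrow> 1) at_top"
      using ratio_lim[OF c, of \<alpha> q 1] K by (simp add: f_def gl_def)
    show "(f \<longlongrightarrow> 0) at_top" unfolding f_def using tendsto_mult_right_zero[OF zero_lim[OF c q, of \<alpha>]] .
  qed
  have gpos: "eventually (\<lambda>n. c * real n - 1 > 0) sequentially"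
  proof -
    have "filterlim (\<lambda>x. c*x-1) at_top at_top" using c by real_asymp
    hence "filterlim (\<lambda>n. c*real n-1) at_top sequentially" by (rule filterlim_compose[OF _ filterlim_real_sequentially])
    from this[unfolded filterlim_at_top_dense] show ?thesis by (rule allE[of _ 0])
  qed
  have l2': "((\<lambda>x. f x / gl x * exp (k * f x)) \<longlongrightarrow> 1) at_top" using l2 by simp
  show ?thesis
  proof (rule tendsto_sandwich[OF _ _ real_lim[OF l1] real_lim[OF l2']])
    show "eventually (\<lambda>n. f (real n) / gu (real n) \<le> (exp (k*(K*(c*real n+\<alpha>) powr q)) - 1)/(k*G n)) sequentially"
      using ev gpos
    proof eventually_elim
      case (elim n)
      have glp: "gl (real n) > 0" using elim K c by (simp add: gl_def)
      have Gp: "G n > 0" using elim glp by (simp add: gl_def)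
      have f0: "f (real n) \<ge> 0" using K by (simp add: f_def)
      have "f (real n) / gu (real n) \<le> f (real n) / G n"
        using elim Gp f0 by (intro divide_left_mono) (auto simp: gu_def)
      also have "\<dots> = (k * f (real n)) / (k * G n)" using k by simp
      also have "\<dots> \<le> (exp (k * f (real n)) - 1) / (k * G n)"
      proof (rule divide_right_mono)
        show "k * f (real n) \<le> exp (k * f (real n)) - 1" using exp_ge_add_one_self[of "k * f (real n)"] by linarith
        show "0 \<le> k * G n" using Gp k by simp
      qed
      finally show ?case by (simp add: f_def)
    qed
    show "eventually (\<lambda>n. (exp (k*(K*(c*real n+\<alpha>) powr q)) - 1)/(k*G n) \<le> f (real n) / gl (real n) * exp (k * f (real n))) sequentially"
      using ev gpos
    proof eventually_elim
      case (elim n)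
      have glp: "gl (real n) > 0" using elim K c by (simp add: gl_def)
      have Gp: "G n > 0" using elim glp by (simp add: gl_def)
      have f0: "f (real n) \<ge> 0" using K by (simp add: f_def)
      define y where "y = k * f (real n)"
      have y0: "y \<ge> 0" using f0 k by (simp add: y_def)
      have "exp y - 1 \<le> y * exp y"
      proof -
        have "1 - y \<le> exp (-y)" using exp_ge_add_one_self[of "-y"] by simp
        hence "(1 - y) * exp y \<le> exp (-y) * exp y" by (intro mult_right_mono) auto
        thus ?thesis by (simp add: exp_minus field_simps)
      qed
      hence "(exp y - 1) / (k * G n) \<le> (y * exp y) / (k * G n)" using Gp k by (intro divide_right_mono) auto
      also have "\<dots> = f (real n) * exp y / G n" using k by (simp add: y_def)
      also have "\<dots> \<le> f (real n) * exp y / gl (real n)"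
        using elim Gp glp f0 by (intro divide_left_mono) (auto simp: gl_def)
      finally show ?case by (simp add: y_def f_def)
    qed
  qed
qed

context fsetup begin

lemma g_meas[measurable]: "g \<in> borel_measurable borel"
  unfolding g_def gammaZ_def[abs_def] by measurable

lemma ind_int: "0 \<le> C \<Longrightarrow> (\<integral>\<^sup>+s. ennreal (indicator (J x) s * C) \<partial>lborel) = ennreal C"
proof -
  assume C: "0 \<le> C"
  have "(\<integral>\<^sup>+s. ennreal (indicator (J x) s * C) \<partial>lborel) = (\<integral>\<^sup>+s. ennreal C * indicator (J x) s \<partial>lborel)"
    by (intro nn_integral_cong) (auto split: split_indicator)
  also have "\<dots> = ennreal C * emeasure lborel (J x)" by (rule nn_integral_cmult_indicator) simp
  also have "emeasure lborel (J x) = 1" by (simp add: J_def)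
  finally show ?thesis by simp
qed

definition CC where "CC x = (\<integral>\<^sup>+t. \<integral>\<^sup>+u. ennreal (indicator (J x) t * indicator (J x) u * exp (g (t - u))) \<partial>lborel \<partial>lborel)"

lemma cfac2: "0 \<le> A \<Longrightarrow> (\<integral>\<^sup>+t. \<integral>\<^sup>+u. ennreal (A * (indicator (J x) t * indicator (J x) u * exp (g (t - u)))) \<partial>lborel \<partial>lborel) = ennreal A * CC x"
proof -
  assume A: "0 \<le> A"
  have "(\<integral>\<^sup>+t. \<integral>\<^sup>+u. ennreal (A * (indicator (J x) t * indicator (J x) u * exp (g (t - u)))) \<partial>lborel \<partial>lborel)
      = (\<integral>\<^sup>+t. ennreal A * \<integral>\<^sup>+u. ennreal (indicator (J x) t * indicator (J x) u * exp (g (t - u))) \<partial>lborel \<partial>lborel)"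
  proof (intro nn_integral_cong)
    fix t
    show "(\<integral>\<^sup>+u. ennreal (A * (indicator (J x) t * indicator (J x) u * exp (g (t - u)))) \<partial>lborel)
      = ennreal A * \<integral>\<^sup>+u. ennreal (indicator (J x) t * indicator (J x) u * exp (g (t - u))) \<partial>lborel"
      using A by (subst nn_integral_cmult[symmetric]) (measurable, simp add: ennreal_mult')
  qed
  also have "\<dots> = ennreal A * CC x" unfolding CC_def by (rule nn_integral_cmult) measurable
  finally show ?thesis .
qed

lemma E1v: "(\<integral>\<^sup>+\<omega>. aa x \<omega> \<partial>M) = ennreal (exp (1/2))"
  unfolding P1 Q1 by (rule ind_int) simp

lemma E2same: "(\<integral>\<^sup>+\<omega>. aa x \<omega> * aa x \<omega> \<partial>M) = ennreal (exp 1) * CC x"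
proof -
  have "(\<integral>\<^sup>+\<omega>. aa x \<omega> * aa x \<omega> \<partial>M) = (\<integral>\<^sup>+s. \<integral>\<^sup>+t. ennreal (exp 1 * (indicator (J x) s * indicator (J x) t * exp (g (s - t)))) \<partial>lborel \<partial>lborel)"
    unfolding P2 Q2 by (intro nn_integral_cong) (simp add: exp_add mult_ac)
  also have "\<dots> = ennreal (exp 1) * CC x" by (rule cfac2) simp
  finally show ?thesis .
qed

lemma box2: "0 \<le> C \<Longrightarrow> (\<integral>\<^sup>+s. \<integral>\<^sup>+t. ennreal (indicator (J x) s * indicator (J y) t * C) \<partial>lborel \<partial>lborel) = ennreal C"
proof -
  assume C: "0 \<le> C"
  have "(\<integral>\<^sup>+s. \<integral>\<^sup>+t. ennreal (indicator (J x) s * indicator (J y) t * C) \<partial>lborel \<partial>lborel)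
     = (\<integral>\<^sup>+s. ennreal (indicator (J x) s * C) \<partial>lborel)"
  proof (intro nn_integral_cong)
    fix s
    have "(\<integral>\<^sup>+t. ennreal (indicator (J x) s * indicator (J y) t * C) \<partial>lborel) = (\<integral>\<^sup>+t. ennreal (indicator (J y) t * (indicator (J x) s * C)) \<partial>lborel)"
      by (simp add: mult_ac)
    also have "\<dots> = ennreal (indicator (J x) s * C)" using C by (intro ind_int) simp
    finally show "(\<integral>\<^sup>+t. ennreal (indicator (J x) s * indicator (J y) t * C) \<partial>lborel) = ennreal (indicator (J x) s * C)" .
  qed
  also have "\<dots> = ennreal C" using C by (rule ind_int)
  finally show ?thesis .
qed

lemma E2bounds:
  assumes b: "\<And>s t. s \<in> J x \<Longrightarrow> t \<in> J y \<Longrightarrow> lo \<le> g (s - t) \<and> g (s - t) \<le> hi"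
  shows "ennreal (exp (1 + lo)) \<le> (\<integral>\<^sup>+\<omega>. aa x \<omega> * aa y \<omega> \<partial>M) \<and> (\<integral>\<^sup>+\<omega>. aa x \<omega> * aa y \<omega> \<partial>M) \<le> ennreal (exp (1 + hi))"
proof -
  have eq: "(\<integral>\<^sup>+\<omega>. aa x \<omega> * aa y \<omega> \<partial>M) = (\<integral>\<^sup>+s. \<integral>\<^sup>+t. ennreal (indicator (J x) s * indicator (J y) t * exp (1 + g (s - t))) \<partial>lborel \<partial>lborel)"
    unfolding P2 Q2 ..
  have "(\<integral>\<^sup>+s. \<integral>\<^sup>+t. ennreal (indicator (J x) s * indicator (J y) t * exp (1 + lo)) \<partial>lborel \<partial>lborel)
     \<le> (\<integral>\<^sup>+s. \<integral>\<^sup>+t. ennreal (indicator (J x) s * indicator (J y) t * exp (1 + g (s - t))) \<partial>lborel \<partial>lborel)"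
    by (intro nn_integral_mono ennreal_leI) (auto simp: indicator_def dest!: b)
  moreover have "(\<integral>\<^sup>+s. \<integral>\<^sup>+t. ennreal (indicator (J x) s * indicator (J y) t * exp (1 + g (s - t))) \<partial>lborel \<partial>lborel)
     \<le> (\<integral>\<^sup>+s. \<integral>\<^sup>+t. ennreal (indicator (J x) s * indicator (J y) t * exp (1 + hi)) \<partial>lborel \<partial>lborel)"
    by (intro nn_integral_mono ennreal_leI) (auto simp: indicator_def dest!: b)
  ultimately show ?thesis unfolding eq box2[OF exp_ge_zero] by simp
qed


lemma form3: "0 \<le> W \<Longrightarrow> (\<integral>\<^sup>+s. \<integral>\<^sup>+t. \<integral>\<^sup>+u. ennreal ((indicator (J x) s * W) * (indicator (J y) t * indicator (J y) u * exp (g (t - u)))) \<partial>lborel \<partial>lborel \<partial>lborel)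
   = ennreal W * CC y"
proof -
  assume W: "0 \<le> W"
  have "(\<integral>\<^sup>+s. \<integral>\<^sup>+t. \<integral>\<^sup>+u. ennreal ((indicator (J x) s * W) * (indicator (J y) t * indicator (J y) u * exp (g (t - u)))) \<partial>lborel \<partial>lborel \<partial>lborel)
     = (\<integral>\<^sup>+s. ennreal (indicator (J x) s * W) * CC y \<partial>lborel)"
    using W by (intro nn_integral_cong cfac2) simp
  also have "\<dots> = (\<integral>\<^sup>+s. ennreal (indicator (J x) s * W) \<partial>lborel) * CC y" by (rule nn_integral_multc) measurable
  also have "\<dots> = ennreal W * CC y" using W by (simp add: ind_int)
  finally show ?thesis .
qed

lemma E3bounds:
  assumes b: "\<And>s t. s \<in> J x \<Longrightarrow> t \<in> J y \<Longrightarrow> lo \<le> g (s - t) \<and> g (s - t) \<le> hi"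
  shows "ennreal (exp (3/2 + 2*lo)) * CC y \<le> (\<integral>\<^sup>+\<omega>. aa x \<omega> * aa y \<omega> * aa y \<omega> \<partial>M) \<and>
         (\<integral>\<^sup>+\<omega>. aa x \<omega> * aa y \<omega> * aa y \<omega> \<partial>M) \<le> ennreal (exp (3/2 + 2*hi)) * CC y"
proof -
  have eq: "(\<integral>\<^sup>+\<omega>. aa x \<omega> * aa y \<omega> * aa y \<omega> \<partial>M) = (\<integral>\<^sup>+s. \<integral>\<^sup>+t. \<integral>\<^sup>+u. ennreal (indicator (J x) s * indicator (J y) t * indicator (J y) u * exp (3/2 + g (s - t) + g (s - u) + g (t - u))) \<partial>lborel \<partial>lborel \<partial>lborel)"
    unfolding P3 Q3 ..
  have "(\<integral>\<^sup>+s. \<integral>\<^sup>+t. \<integral>\<^sup>+u. ennreal ((indicator (J x) s * exp (3/2 + 2*lo)) * (indicator (J y) t * indicator (J y) u * exp (g (t - u)))) \<partial>lborel \<partial>lborel \<partial>lborel)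
     \<le> (\<integral>\<^sup>+s. \<integral>\<^sup>+t. \<integral>\<^sup>+u. ennreal (indicator (J x) s * indicator (J y) t * indicator (J y) u * exp (3/2 + g (s - t) + g (s - u) + g (t - u))) \<partial>lborel \<partial>lborel \<partial>lborel)"
  proof (intro nn_integral_mono ennreal_leI)
    fix s t u
    show "(indicator (J x) s * exp (3/2 + 2*lo)) * (indicator (J y) t * indicator (J y) u * exp (g (t - u)))
       \<le> indicator (J x) s * indicator (J y) t * indicator (J y) u * exp (3/2 + g (s - t) + g (s - u) + g (t - u))"
    proof (cases "s \<in> J x \<and> t \<in> J y \<and> u \<in> J y")
      case True
      hence "lo \<le> g (s - t)" "lo \<le> g (s - u)" using b by auto
      hence "exp (3/2 + 2*lo + g (t - u)) \<le> exp (3/2 + g (s - t) + g (s - u) + g (t - u))" by simp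
      thus ?thesis using True by (simp add: exp_add)
    qed (auto simp: indicator_def)
  qed
  moreover have "(\<integral>\<^sup>+s. \<integral>\<^sup>+t. \<integral>\<^sup>+u. ennreal (indicator (J x) s * indicator (J y) t * indicator (J y) u * exp (3/2 + g (s - t) + g (s - u) + g (t - u))) \<partial>lborel \<partial>lborel \<partial>lborel)
     \<le> (\<integral>\<^sup>+s. \<integral>\<^sup>+t. \<integral>\<^sup>+u. ennreal ((indicator (J x) s * exp (3/2 + 2*hi)) * (indicator (J y) t * indicator (J y) u * exp (g (t - u)))) \<partial>lborel \<partial>lborel \<partial>lborel)"
  proof (intro nn_integral_mono ennreal_leI)
    fix s t u
    show "indicator (J x) s * indicator (J y) t * indicator (J y) u * exp (3/2 + g (s - t) + g (s - u) + g (t - u))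
       \<le> (indicator (J x) s * exp (3/2 + 2*hi)) * (indicator (J y) t * indicator (J y) u * exp (g (t - u)))"
    proof (cases "s \<in> J x \<and> t \<in> J y \<and> u \<in> J y")
      case True
      hence "g (s - t) \<le> hi" "g (s - u) \<le> hi" using b by auto
      hence "exp (3/2 + g (s - t) + g (s - u) + g (t - u)) \<le> exp (3/2 + 2*hi + g (t - u))" by simp
      thus ?thesis using True by (simp add: exp_add)
    qed (auto simp: indicator_def)
  qed
  ultimately show ?thesis unfolding eq form3[OF exp_ge_zero] by simp
qed

lemma form4: "0 \<le> W \<Longrightarrow> (\<integral>\<^sup>+s. \<integral>\<^sup>+t. \<integral>\<^sup>+u. \<integral>\<^sup>+v. ennreal ((W * (indicator (J x) s * indicator (J x) t * exp (g (s - t)))) * (indicator (J y) u * indicator (J y) v * exp (g (u - v)))) \<partial>lborel \<partial>lborel \<partial>lborel \<partial>lborel)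
   = ennreal W * CC x * CC y"
proof -
  assume W: "0 \<le> W"
  have "(\<integral>\<^sup>+s. \<integral>\<^sup>+t. \<integral>\<^sup>+u. \<integral>\<^sup>+v. ennreal ((W * (indicator (J x) s * indicator (J x) t * exp (g (s - t)))) * (indicator (J y) u * indicator (J y) v * exp (g (u - v)))) \<partial>lborel \<partial>lborel \<partial>lborel \<partial>lborel)
     = (\<integral>\<^sup>+s. \<integral>\<^sup>+t. ennreal (W * (indicator (J x) s * indicator (J x) t * exp (g (s - t)))) * CC y \<partial>lborel \<partial>lborel)"
    using W by (intro nn_integral_cong cfac2) simp
  also have "\<dots> = (\<integral>\<^sup>+s. (\<integral>\<^sup>+t. ennreal (W * (indicator (J x) s * indicator (J x) t * exp (g (s - t)))) \<partial>lborel) * CC y \<partial>lborel)"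
    by (intro nn_integral_cong nn_integral_multc) measurable
  also have "\<dots> = (\<integral>\<^sup>+s. \<integral>\<^sup>+t. ennreal (W * (indicator (J x) s * indicator (J x) t * exp (g (s - t)))) \<partial>lborel \<partial>lborel) * CC y"
    by (rule nn_integral_multc) measurable
  also have "\<dots> = ennreal W * CC x * CC y" using W by (simp add: cfac2)
  finally show ?thesis .
qed

lemma E4bounds:
  assumes b: "\<And>s t. s \<in> J x \<Longrightarrow> t \<in> J y \<Longrightarrow> lo \<le> g (s - t) \<and> g (s - t) \<le> hi"
  shows "ennreal (exp (2 + 4*lo)) * CC x * CC y \<le> (\<integral>\<^sup>+\<omega>. aa x \<omega> * aa x \<omega> * aa y \<omega> * aa y \<omega> \<partial>M) \<and>
         (\<integral>\<^sup>+\<omega>. aa x \<omega> * aa x \<omega> * aa y \<omega> * aa y \<omega> \<partial>M) \<le> ennreal (exp (2 + 4*hi)) * CC x * CC y"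
proof -
  define F where "F s t u v = indicator (J x) s * indicator (J x) t * indicator (J y) u * indicator (J y) v *
     exp (2 + g (s - t) + g (s - u) + g (s - v) + g (t - u) + g (t - v) + g (u - v))" for s t u v :: real
  define H where "H W s t u v = (W * (indicator (J x) s * indicator (J x) t * exp (g (s - t)))) * (indicator (J y) u * indicator (J y) v * exp (g (u - v)))" for W s t u v :: real
  have eq: "(\<integral>\<^sup>+\<omega>. aa x \<omega> * aa x \<omega> * aa y \<omega> * aa y \<omega> \<partial>M) = (\<integral>\<^sup>+s. \<integral>\<^sup>+t. \<integral>\<^sup>+u. \<integral>\<^sup>+v. ennreal (F s t u v) \<partial>lborel \<partial>lborel \<partial>lborel \<partial>lborel)"
    unfolding P4 Q4 F_def ..
  have "(\<integral>\<^sup>+s. \<integral>\<^sup>+t. \<integral>\<^sup>+u. \<integral>\<^sup>+v. ennreal (H (exp (2 + 4*lo)) s t u v) \<partial>lborel \<partial>lborel \<partial>lborel \<partial>lborel)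
     \<le> (\<integral>\<^sup>+s. \<integral>\<^sup>+t. \<integral>\<^sup>+u. \<integral>\<^sup>+v. ennreal (F s t u v) \<partial>lborel \<partial>lborel \<partial>lborel \<partial>lborel)"
  proof (intro nn_integral_mono ennreal_leI)
    fix s t u v
    show "H (exp (2 + 4*lo)) s t u v \<le> F s t u v"
    proof (cases "s \<in> J x \<and> t \<in> J x \<and> u \<in> J y \<and> v \<in> J y")
      case True
      hence "lo \<le> g (s - u)" "lo \<le> g (s - v)" "lo \<le> g (t - u)" "lo \<le> g (t - v)" using b by auto
      hence "exp (2 + 4*lo + g (s - t) + g (u - v)) \<le> exp (2 + g (s - t) + g (s - u) + g (s - v) + g (t - u) + g (t - v) + g (u - v))" by simp
      thus ?thesis using True by (simp add: exp_add H_def F_def mult_ac)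
    qed (auto simp: indicator_def H_def F_def)
  qed
  moreover have "(\<integral>\<^sup>+s. \<integral>\<^sup>+t. \<integral>\<^sup>+u. \<integral>\<^sup>+v. ennreal (F s t u v) \<partial>lborel \<partial>lborel \<partial>lborel \<partial>lborel)
     \<le> (\<integral>\<^sup>+s. \<integral>\<^sup>+t. \<integral>\<^sup>+u. \<integral>\<^sup>+v. ennreal (H (exp (2 + 4*hi)) s t u v) \<partial>lborel \<partial>lborel \<partial>lborel \<partial>lborel)"
  proof (intro nn_integral_mono ennreal_leI)
    fix s t u v
    show "F s t u v \<le> H (exp (2 + 4*hi)) s t u v"
    proof (cases "s \<in> J x \<and> t \<in> J x \<and> u \<in> J y \<and> v \<in> J y")
      case True
      hence "g (s - u) \<le> hi" "g (s - v) \<le> hi" "g (t - u) \<le> hi" "g (t - v) \<le> hi" using b by auto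
      hence "exp (2 + g (s - t) + g (s - u) + g (s - v) + g (t - u) + g (t - v) + g (u - v)) \<le> exp (2 + 4*hi + g (s - t) + g (u - v))" by simp
      thus ?thesis using True by (simp add: exp_add H_def F_def mult_ac)
    qed (auto simp: indicator_def H_def F_def)
  qed
  ultimately show ?thesis unfolding eq H_def form4[OF exp_ge_zero] by simp
qed

end

lemma lbint_m10: fixes f :: "real \<Rightarrow> real" shows "(LBINT u=-1..0. f u) = integral\<^sup>L lborel (\<lambda>u. indicator {-1<..<0::real} u * f u)"
proof -
  have e: "einterval (-1) 0 = {-1<..<0::real}"
  proof -
    have m1: "-(1::ereal) = ereal (-1)" by (simp add: one_ereal_def)
    show ?thesis by (auto simp: einterval_def m1)
  qed
  show ?thesis by (simp add: interval_lebesgue_integral_def set_lebesgue_integral_def e)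
qed

lemma lbint_L: fixes f :: "real \<Rightarrow> real" shows "(LBINT u=real L - 1..real L. f u) = integral\<^sup>L lborel (\<lambda>u. indicator {real L - 1<..<real L} u * f u)"
  by (simp add: interval_lebesgue_integral_def set_lebesgue_integral_def)

context fsetup begin

lemma CC_shift: "CC x = CC 0"
proof -
  define h where "h t u = ennreal (indicator (J x) t * indicator (J x) u * exp (g (t - u)))" for t u
  have hm[measurable]: "(\<lambda>(t,u). h t u) \<in> borel_measurable (borel \<Otimes>\<^sub>M borel)" unfolding h_def by measurable
  have inner: "(\<integral>\<^sup>+u. h t u \<partial>lborel) = (\<integral>\<^sup>+u. h t (x + u) \<partial>lborel)" for t
  proof -
    have m: "h t \<in> borel_measurable borel" unfolding h_def by measurable
    from nn_integral_real_affine[OF m, of 1 x] show ?thesis by simp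
  qed
  have outer: "(\<integral>\<^sup>+t. (\<integral>\<^sup>+u. h t (x + u) \<partial>lborel) \<partial>lborel) = (\<integral>\<^sup>+t. (\<integral>\<^sup>+u. h (x + t) (x + u) \<partial>lborel) \<partial>lborel)"
  proof -
    have m: "(\<lambda>t. \<integral>\<^sup>+u. h t (x + u) \<partial>lborel) \<in> borel_measurable borel" by measurable
    from nn_integral_real_affine[OF m, of 1 x] show ?thesis by simp
  qed
  have "CC x = (\<integral>\<^sup>+t. (\<integral>\<^sup>+u. h t u \<partial>lborel) \<partial>lborel)" unfolding CC_def h_def ..
  also have "\<dots> = (\<integral>\<^sup>+t. (\<integral>\<^sup>+u. h (x + t) (x + u) \<partial>lborel) \<partial>lborel)" unfolding inner outer ..
  also have "\<dots> = CC 0" unfolding CC_def h_def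
    by (intro nn_integral_cong arg_cong[where f=ennreal]) (simp add: J_def indicator_def)
  finally show ?thesis .
qed

lemma abs3: "0 \<le> (X1::real) \<Longrightarrow> X1 \<le> P \<Longrightarrow> 0 \<le> X2 \<Longrightarrow> X2 \<le> P \<Longrightarrow> 0 \<le> X3 \<Longrightarrow> X3 \<le> P \<Longrightarrow> \<bar>(X1 - 2*X2 + X3)/2\<bar> \<le> P"
  by (simp add: abs_le_iff)

definition Pb where "Pb = (c+1) powr (2*(1/2+d))"

lemma g_bound: assumes r: "\<bar>r\<bar> \<le> 1" shows "\<bar>g r\<bar> \<le> Pb"
proof -
  have cr: "\<bar>c*r\<bar> \<le> c" using r c0 by (simp add: abs_mult mult_left_le)
  have a: "\<bar>c*r+1\<bar> \<le> c+1" "\<bar>c*r\<bar> \<le> c+1" "\<bar>c*r-1\<bar> \<le> c+1" using cr by auto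
  have "\<bar>c*r+1\<bar> powr (2*(1/2+d)) \<le> Pb" "\<bar>c*r\<bar> powr (2*(1/2+d)) \<le> Pb" "\<bar>c*r-1\<bar> powr (2*(1/2+d)) \<le> Pb"
    unfolding Pb_def using a d0 by (auto intro!: powr_mono2)
  moreover have "0 \<le> \<bar>c*r+1\<bar> powr (2*(1/2+d))" "0 \<le> \<bar>c*r\<bar> powr (2*(1/2+d))" "0 \<le> \<bar>c*r-1\<bar> powr (2*(1/2+d))"
    by simp_all
  ultimately show ?thesis unfolding g_def gammaZ_def by (intro abs3)
qed

definition Ct where "Ct = (LBINT s=-1..0. (LBINT u=-1..0. exp (g (s - u))))"

lemma J0: "J 0 = {-1<..<0}" by (simp add: J_def)

lemma Ct_CC: "CC 0 = ennreal Ct \<and> Ct > 0"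
proof -
  define G where "G s = (\<integral>\<^sup>+u. ennreal (indicator {-1<..<0::real} u * exp (g (s - u))) \<partial>lborel)" for s
  have Gm[measurable]: "G \<in> borel_measurable borel" unfolding G_def by measurable
  have inner: "(LBINT u=-1..0. exp (g (s - u))) = enn2real (G s)" for s
    unfolding lbint_m10 G_def by (rule integral_eq_nn_integral) auto
  have "Ct = integral\<^sup>L lborel (\<lambda>s. indicator {-1<..<0::real} s * enn2real (G s))"
    unfolding Ct_def inner lbint_m10 ..
  also have "\<dots> = enn2real (\<integral>\<^sup>+s. ennreal (indicator {-1<..<0::real} s * enn2real (G s)) \<partial>lborel)"
    by (rule integral_eq_nn_integral) auto
  also have "(\<integral>\<^sup>+s. ennreal (indicator {-1<..<0::real} s * enn2real (G s)) \<partial>lborel) = CC 0"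
    unfolding CC_def J0
  proof (intro nn_integral_cong)
    fix s :: real
    show "ennreal (indicator {-1<..<0::real} s * enn2real (G s)) = (\<integral>\<^sup>+u. ennreal (indicator {-1<..<0} s * indicator {-1<..<0} u * exp (g (s - u))) \<partial>lborel)"
    proof (cases "s \<in> {-1<..<0}")
      case True
      have "G s \<le> (\<integral>\<^sup>+u. ennreal (indicator {-1<..<0::real} u * exp Pb) \<partial>lborel)"
        unfolding G_def
      proof (intro nn_integral_mono ennreal_leI)
        fix u
        show "indicator {-1<..<0::real} u * exp (g (s - u)) \<le> indicator {-1<..<0} u * exp Pb"
        proof (cases "u \<in> {-1<..<0}")
          case True
          with \<open>s \<in> {-1<..<0}\<close> have "\<bar>s - u\<bar> \<le> 1" by auto
          from g_bound[OF this] True show ?thesis by simp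
        qed simp
      qed
      also have "\<dots> = ennreal (exp Pb)" using ind_int[of "exp Pb" 0] by (simp add: J0)
      finally have "G s < top" by (simp add: order_le_less_trans)
      thus ?thesis using True by (simp add: G_def)
    qed simp
  qed
  finally have Ct: "Ct = enn2real (CC 0)" .
  have lo: "ennreal (exp (-Pb)) \<le> CC 0" and hi: "CC 0 \<le> ennreal (exp Pb)"
  proof -
    have b: "\<And>s u. s \<in> J 0 \<Longrightarrow> u \<in> J 0 \<Longrightarrow> -Pb \<le> g (s - u) \<and> g (s - u) \<le> Pb"
    proof -
      fix s u assume "s \<in> J 0" "u \<in> J 0"
      hence "\<bar>s - u\<bar> \<le> 1" by (auto simp: J0)
      from g_bound[OF this] show "-Pb \<le> g (s - u) \<and> g (s - u) \<le> Pb" by auto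
    qed
    have "(\<integral>\<^sup>+s. \<integral>\<^sup>+t. ennreal (indicator (J 0) s * indicator (J 0) t * exp (-Pb)) \<partial>lborel \<partial>lborel) \<le> CC 0"
      unfolding CC_def
    proof (intro nn_integral_mono ennreal_leI)
      fix s t
      show "indicator (J 0) s * indicator (J 0) t * exp (-Pb) \<le> indicator (J 0) s * indicator (J 0) t * exp (g (s - t))"
        using b[of s t] by (cases "s \<in> J 0 \<and> t \<in> J 0") (auto simp: indicator_def)
    qed
    thus "ennreal (exp (-Pb)) \<le> CC 0" by (simp add: box2)
    have "CC 0 \<le> (\<integral>\<^sup>+s. \<integral>\<^sup>+t. ennreal (indicator (J 0) s * indicator (J 0) t * exp Pb) \<partial>lborel \<partial>lborel)"
      unfolding CC_def
    proof (intro nn_integral_mono ennreal_leI)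
      fix s t
      show "indicator (J 0) s * indicator (J 0) t * exp (g (s - t)) \<le> indicator (J 0) s * indicator (J 0) t * exp Pb"
        using b[of s t] by (cases "s \<in> J 0 \<and> t \<in> J 0") (auto simp: indicator_def)
    qed
    thus "CC 0 \<le> ennreal (exp Pb)" by (simp add: box2)
  qed
  have fin: "CC 0 < top" using hi by (simp add: order_le_less_trans)
  have "exp (-Pb) \<le> Ct" unfolding Ct using enn2real_mono[OF lo fin] by simp
  hence "Ct > 0" using exp_gt_zero[of "-Pb"] by linarith
  moreover have "CC 0 = ennreal Ct" unfolding Ct using fin by simp
  ultimately show ?thesis by simp
qed

end

lemma enn_bounds: "ennreal a \<le> E \<Longrightarrow> E \<le> ennreal b \<Longrightarrow> 0 \<le> a \<Longrightarrow> 0 \<le> b \<Longrightarrow> a \<le> enn2real E \<and> enn2real E \<le> b \<and> E < top"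
proof -
  assume h: "ennreal a \<le> E" "E \<le> ennreal b" "0 \<le> a" "0 \<le> b"
  have fin: "E < top" using h(2) by (simp add: order_le_less_trans)
  have "enn2real (ennreal a) \<le> enn2real E" by (rule enn2real_mono[OF h(1) fin])
  moreover have "enn2real E \<le> enn2real (ennreal b)" by (rule enn2real_mono[OF h(2)]) simp
  ultimately show ?thesis using h fin by simp
qed

lemma ratio_b:
  fixes M k G v a b T :: real
  assumes "0 < M" "0 < k" "0 < G" "M*(a-1) \<le> v" "v \<le> M*(b-1)" "T = k*M*G"
  shows "(a-1)/(k*G) \<le> v/T \<and> v/T \<le> (b-1)/(k*G)"
proof -
  have kmg: "0 < k*M*G" using assms by simp
  have "(a-1)/(k*G) = (M*(a-1))/(k*M*G)" using assms by (simp add: field_simps)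
  also have "\<dots> \<le> v/(k*M*G)" by (rule divide_right_mono) (use assms kmg in auto)
  finally have 1: "(a-1)/(k*G) \<le> v/T" using assms by simp
  have "v/(k*M*G) \<le> (M*(b-1))/(k*M*G)" by (rule divide_right_mono) (use assms kmg in auto)
  also have "\<dots> = (b-1)/(k*G)" using assms by (simp add: field_simps)
  finally have 2: "v/T \<le> (b-1)/(k*G)" using assms by simp
  from 1 2 show ?thesis ..
qed

context fsetup begin

lemma LINT_enn:
  assumes [measurable]: "F \<in> borel_measurable M" and fin: "integral\<^sup>N M F < top"
  shows "(LINT \<omega>|M. enn2real (F \<omega>)) = enn2real (integral\<^sup>N M F)"
proof -
  have "(LINT \<omega>|M. enn2real (F \<omega>)) = enn2real (\<integral>\<^sup>+\<omega>. ennreal (enn2real (F \<omega>)) \<partial>M)"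
    by (rule integral_eq_nn_integral) auto
  also have "(\<integral>\<^sup>+\<omega>. ennreal (enn2real (F \<omega>)) \<partial>M) = integral\<^sup>N M F"
  proof (rule nn_integral_cong_AE)
    have "AE \<omega> in M. F \<omega> \<noteq> \<infinity>" by (rule nn_integral_PInf_AE) (use fin in auto)
    thus "AE \<omega> in M. ennreal (enn2real (F \<omega>)) = F \<omega>" by eventually_elim (simp add: less_top)
  qed
  finally show ?thesis .
qed

lemma A_conv:
  assumes \<omega>: "\<omega> \<in> space M"
  shows "(LBINT s=real L - 1..real L. exp (B (c * s) \<omega> - B (c * s - 1) \<omega>)) = enn2real (aa (real L) \<omega>)"
proof -
  have [measurable]: "(\<lambda>s. \<omega>) \<in> measurable lborel M" using \<omega> by simp
  have "(LBINT s=real L - 1..real L. exp (B (c * s) \<omega> - B (c * s - 1) \<omega>)) = integral\<^sup>L lborel (\<lambda>s. indicator (J (real L)) s * exp (Z s \<omega>))"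
    unfolding lbint_L by (simp add: J_def Z_def)
  also have "\<dots> = enn2real (aa (real L) \<omega>)" unfolding aa_def
    by (rule integral_eq_nn_integral) auto
  finally show ?thesis .
qed

definition lo where "lo n = d*(1+2*d) * (c*real n + (c+1)) powr (2*d-1)" for n :: nat
definition hi where "hi n = d*(1+2*d) * (c*real n + -(c+1)) powr (2*d-1)" for n :: nat

lemma gb:
  assumes n: "c*(real n - 1) > 1" and r: "real n - 1 < r" "r < real n + 1"
  shows "lo n \<le> g r \<and> g r \<le> hi n"
proof -
  have m1: "c*(real n - 1) < c*r" by (rule mult_strict_left_mono[OF r(1) c0])
  have m2: "c*r < c*(real n + 1)" by (rule mult_strict_left_mono[OF r(2) c0])
  have cr: "c*r > 1" using n m1 by linarith
  have gbd: "d*(1+2*d) * (c*r+1) powr (2*d-1) \<le> g r \<and> g r \<le> d*(1+2*d) * (c*r-1) powr (2*d-1)"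
    unfolding g_def by (rule gam_bounds[OF d0 d1 cr])
  have K: "0 \<le> d*(1+2*d)" using d0 by simp
  have q: "2*d-1 \<le> 0" using d1 by simp
  have u1: "c*r+1 \<le> c*real n + (c+1)" using m2 by (simp add: algebra_simps)
  have u2: "c*real n + -(c+1) \<le> c*r - 1" using m1 by (simp add: algebra_simps)
  have u3: "0 < c*real n + -(c+1)" using n by (simp add: algebra_simps)
  have "(c*real n + (c+1)) powr (2*d-1) \<le> (c*r+1) powr (2*d-1)"
    by (rule powr_mono2'[OF q _ u1]) (use cr in simp)
  hence "lo n \<le> d*(1+2*d) * (c*r+1) powr (2*d-1)" unfolding lo_def by (rule mult_left_mono[OF _ K])
  moreover have "(c*r - 1) powr (2*d-1) \<le> (c*real n + -(c+1)) powr (2*d-1)"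
    by (rule powr_mono2'[OF q u3 u2])
  hence "d*(1+2*d) * (c*r-1) powr (2*d-1) \<le> hi n" unfolding hi_def by (rule mult_left_mono[OF _ K])
  ultimately show ?thesis using gbd by linarith
qed

lemma bxy: "c*(real n - 1) > 1 \<Longrightarrow> s \<in> J (real n) \<Longrightarrow> t \<in> J 0 \<Longrightarrow> lo n \<le> g (s - t) \<and> g (s - t) \<le> hi n"
  by (rule gb) (auto simp: J_def)

lemma byx: "c*(real n - 1) > 1 \<Longrightarrow> s \<in> J 0 \<Longrightarrow> t \<in> J (real n) \<Longrightarrow> lo n \<le> g (s - t) \<and> g (s - t) \<le> hi n"
  using bxy[of n t s] g_sym[of s t] by simp

end

context fsetup begin

lemma N_ev: "eventually (\<lambda>n. c*(real n - 1) > 1) sequentially"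
proof -
  have "filterlim (\<lambda>x. c*(x - 1)) at_top at_top" using c0 by real_asymp
  hence "filterlim (\<lambda>n. c*(real n - 1)) at_top sequentially" by (rule filterlim_compose[OF _ filterlim_real_sequentially])
  from this[unfolded filterlim_at_top_dense] show ?thesis by (rule allE[of _ 1])
qed

lemma gpos: "c*(real n - 1) > 1 \<Longrightarrow> g (real n) > 0"
proof -
  assume h: "c*(real n - 1) > 1"
  have "lo n \<le> g (real n)" using gb[OF h, of "real n"] by simp
  moreover have "c * real n \<ge> 0" using c0 by simp
  hence p: "c*real n + (c+1) > 0" using c0 by linarith
  have "lo n > 0" unfolding lo_def using d0 p by simp
  ultimately show ?thesis by linarith
qed

lemma final:
  fixes R :: "nat \<Rightarrow> real" and k :: real
  assumes k: "k > 0"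
    and ev: "eventually (\<lambda>n. (exp (k*lo n) - 1)/(k*g (real n)) \<le> R n \<and> R n \<le> (exp (k*hi n) - 1)/(k*g (real n))) sequentially"
  shows "R \<longlonglongrightarrow> 1"
proof -
  have K: "d*(1+2*d) > 0" using d0 by simp
  have q: "2*d-1 < 0" using d1 by simp
  have G: "eventually (\<lambda>n. d*(1+2*d)*(c*real n+1) powr (2*d-1) \<le> g (real n) \<and> g (real n) \<le> d*(1+2*d)*(c*real n-1) powr (2*d-1)) sequentially"
    using N_ev
  proof eventually_elim
    case (elim n)
    have "c * real n > 1" using elim c0 by (smt (verit) mult_left_mono of_nat_0_le_iff)
    thus ?case unfolding g_def by (rule gam_bounds[OF d0 d1])
  qed
  have l1: "(\<lambda>n. (exp (k*lo n) - 1)/(k*g (real n))) \<longlonglongrightarrow> 1"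
    unfolding lo_def using key_lim[OF k K q c0 G, of "c+1"] .
  have l2: "(\<lambda>n. (exp (k*hi n) - 1)/(k*g (real n))) \<longlonglongrightarrow> 1"
    unfolding hi_def using key_lim[OF k K q c0 G, of "-(c+1)"] .
  show ?thesis
    by (rule tendsto_sandwich[OF _ _ l1 l2]) (use ev in \<open>auto elim: eventually_mono\<close>)
qed

end

context fsetup begin

lemma four: "(LBINT s=-1..0. (LBINT t=-1..0. (LBINT u=-1..0. (LBINT v=-1..0. exp (g (s - t)) * exp (g (u - v)))))) = Ct * Ct"
  by (simp add: Ct_def)

lemma main_loc:
  fixes A BB :: "nat \<Rightarrow> 'a \<Rightarrow> real"
  assumes Adef: "A = (\<lambda>L \<omega>. LBINT s=real L - 1..real L. exp (B (c * s) \<omega> - B (c * s - 1) \<omega>))"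
    and BBdef: "BB = (\<lambda>L \<omega>. LBINT s=real L - 1..real L. (LBINT t=real L - 1..real L.
                  exp (B (c * s) \<omega> - B (c * s - 1) \<omega>) * exp (B (c * t) \<omega> - B (c * t - 1) \<omega>)))"
  shows "(\<lambda>L. cov M (A L) (A 0)) \<sim>[at_top] (\<lambda>L. exp 1 * g (real L)) \<and>
         (\<lambda>L. cov M (A 0) (BB L)) \<sim>[at_top] (\<lambda>L. 2 * exp (3/2) * g (real L) * Ct) \<and>
         (\<lambda>L. cov M (BB 0) (BB L)) \<sim>[at_top] (\<lambda>L. 4 * exp 2 * g (real L) * (Ct * Ct))"
proof -
  interpret prob_space M by (rule prob)
  have Aconv: "A L \<omega> = enn2real (aa (real L) \<omega>)" if "\<omega> \<in> space M" for L \<omega>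
    unfolding Adef using A_conv[OF that] by simp
  have BBeq: "BB L \<omega> = A L \<omega> * A L \<omega>" for L \<omega>
    unfolding Adef BBdef by simp
  have ee: "exp (1/2) * exp (1/2) = exp (1::real)" by (simp flip: exp_add)
  have e32: "exp (1/2) * exp 1 = exp (3/2::real)" by (simp flip: exp_add)
  have Ct: "CC x = ennreal Ct" "Ct > 0" for x using Ct_CC CC_shift[of x] by auto
  have LA: "(LINT \<omega>|M. A L \<omega>) = exp (1/2)" for L
  proof -
    have "(LINT \<omega>|M. A L \<omega>) = (LINT \<omega>|M. enn2real (aa (real L) \<omega>))"
      by (rule Bochner_Integration.integral_cong) (simp_all add: Aconv)
    also have "\<dots> = enn2real (\<integral>\<^sup>+\<omega>. aa (real L) \<omega> \<partial>M)" by (rule LINT_enn) (simp_all add: E1v)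
    finally show ?thesis by (simp add: E1v)
  qed
  have LAA: "(LINT \<omega>|M. A L \<omega> * A L \<omega>) = exp 1 * Ct" for L
  proof -
    have "(LINT \<omega>|M. A L \<omega> * A L \<omega>) = (LINT \<omega>|M. enn2real (aa (real L) \<omega> * aa (real L) \<omega>))"
      by (rule Bochner_Integration.integral_cong) (simp_all add: Aconv enn2real_mult)
    also have "\<dots> = enn2real (\<integral>\<^sup>+\<omega>. aa (real L) \<omega> * aa (real L) \<omega> \<partial>M)"
      by (rule LINT_enn) (simp_all add: E2same Ct ennreal_mult'[symmetric])
    finally show ?thesis by (simp add: E2same Ct ennreal_mult'[symmetric])
  qed
  have LBB: "(LINT \<omega>|M. BB L \<omega>) = exp 1 * Ct" for L by (simp add: BBeq LAA)
  have c1: "eventually (\<lambda>n. (exp (1*lo n) - 1)/(1*g (real n)) \<le> cov M (A n) (A 0) / (exp 1 * g (real n)) \<and>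
      cov M (A n) (A 0) / (exp 1 * g (real n)) \<le> (exp (1*hi n) - 1)/(1*g (real n))) sequentially"
    using N_ev
  proof eventually_elim
    case (elim n)
    have bd: "ennreal (exp (1 + lo n)) \<le> (\<integral>\<^sup>+\<omega>. aa (real n) \<omega> * aa 0 \<omega> \<partial>M) \<and> (\<integral>\<^sup>+\<omega>. aa (real n) \<omega> * aa 0 \<omega> \<partial>M) \<le> ennreal (exp (1 + hi n))"
      by (rule E2bounds) (rule bxy[OF elim])
    hence rb: "exp (1 + lo n) \<le> enn2real (\<integral>\<^sup>+\<omega>. aa (real n) \<omega> * aa 0 \<omega> \<partial>M) \<and> enn2real (\<integral>\<^sup>+\<omega>. aa (real n) \<omega> * aa 0 \<omega> \<partial>M) \<le> exp (1 + hi n)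
        \<and> (\<integral>\<^sup>+\<omega>. aa (real n) \<omega> * aa 0 \<omega> \<partial>M) < top"
      by (intro enn_bounds) auto
    have "(LINT \<omega>|M. A n \<omega> * A 0 \<omega>) = (LINT \<omega>|M. enn2real (aa (real n) \<omega> * aa 0 \<omega>))"
      by (rule Bochner_Integration.integral_cong) (simp_all add: Aconv enn2real_mult)
    also have "\<dots> = enn2real (\<integral>\<^sup>+\<omega>. aa (real n) \<omega> * aa 0 \<omega> \<partial>M)" by (rule LINT_enn) (use rb in simp_all)
    finally have cv: "cov M (A n) (A 0) = enn2real (\<integral>\<^sup>+\<omega>. aa (real n) \<omega> * aa 0 \<omega> \<partial>M) - exp 1"
      unfolding cov_def using LA ee by simp
    show ?case
    proof (rule ratio_b)
      show "0 < exp (1::real)" by simp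
      show "0 < (1::real)" by simp
      show "0 < g (real n)" by (rule gpos[OF elim])
      show "exp 1 * (exp (1*lo n) - 1) \<le> cov M (A n) (A 0)" using rb cv by (simp add: exp_add algebra_simps)
      show "cov M (A n) (A 0) \<le> exp 1 * (exp (1*hi n) - 1)" using rb cv by (simp add: exp_add algebra_simps)
    qed simp
  qed
  have c2: "eventually (\<lambda>n. (exp (2*lo n) - 1)/(2*g (real n)) \<le> cov M (A 0) (BB n) / (2 * exp (3/2) * g (real n) * Ct) \<and>
      cov M (A 0) (BB n) / (2 * exp (3/2) * g (real n) * Ct) \<le> (exp (2*hi n) - 1)/(2*g (real n))) sequentially"
    using N_ev
  proof eventually_elim
    case (elim n)
    have bd: "ennreal (exp (3/2 + 2*lo n)) * CC (real n) \<le> (\<integral>\<^sup>+\<omega>. aa 0 \<omega> * aa (real n) \<omega> * aa (real n) \<omega> \<partial>M) \<and>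
        (\<integral>\<^sup>+\<omega>. aa 0 \<omega> * aa (real n) \<omega> * aa (real n) \<omega> \<partial>M) \<le> ennreal (exp (3/2 + 2*hi n)) * CC (real n)"
      by (rule E3bounds) (rule byx[OF elim])
    hence "ennreal (exp (3/2 + 2*lo n) * Ct) \<le> (\<integral>\<^sup>+\<omega>. aa 0 \<omega> * aa (real n) \<omega> * aa (real n) \<omega> \<partial>M) \<and>
        (\<integral>\<^sup>+\<omega>. aa 0 \<omega> * aa (real n) \<omega> * aa (real n) \<omega> \<partial>M) \<le> ennreal (exp (3/2 + 2*hi n) * Ct)"
      by (simp add: Ct ennreal_mult'[symmetric])
    hence rb: "exp (3/2 + 2*lo n) * Ct \<le> enn2real (\<integral>\<^sup>+\<omega>. aa 0 \<omega> * aa (real n) \<omega> * aa (real n) \<omega> \<partial>M) \<and>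
        enn2real (\<integral>\<^sup>+\<omega>. aa 0 \<omega> * aa (real n) \<omega> * aa (real n) \<omega> \<partial>M) \<le> exp (3/2 + 2*hi n) * Ct
        \<and> (\<integral>\<^sup>+\<omega>. aa 0 \<omega> * aa (real n) \<omega> * aa (real n) \<omega> \<partial>M) < top"
      by (intro enn_bounds) (use Ct in auto)
    have "(LINT \<omega>|M. A 0 \<omega> * BB n \<omega>) = (LINT \<omega>|M. enn2real (aa 0 \<omega> * aa (real n) \<omega> * aa (real n) \<omega>))"
      by (rule Bochner_Integration.integral_cong) (simp_all add: Aconv BBeq enn2real_mult)
    also have "\<dots> = enn2real (\<integral>\<^sup>+\<omega>. aa 0 \<omega> * aa (real n) \<omega> * aa (real n) \<omega> \<partial>M)" by (rule LINT_enn) (use rb in simp_all)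
    finally have cv: "cov M (A 0) (BB n) = enn2real (\<integral>\<^sup>+\<omega>. aa 0 \<omega> * aa (real n) \<omega> * aa (real n) \<omega> \<partial>M) - exp (3/2) * Ct"
      unfolding cov_def using LA LBB e32 by (simp add: mult.assoc[symmetric])
    show ?case
    proof (rule ratio_b)
      show "0 < exp (3/2::real) * Ct" using Ct by simp
      show "0 < (2::real)" by simp
      show "0 < g (real n)" by (rule gpos[OF elim])
      show "exp (3/2) * Ct * (exp (2*lo n) - 1) \<le> cov M (A 0) (BB n)" using rb cv by (simp add: exp_add algebra_simps)
      show "cov M (A 0) (BB n) \<le> exp (3/2) * Ct * (exp (2*hi n) - 1)" using rb cv by (simp add: exp_add algebra_simps)
    qed simp
  qed
  have c3: "eventually (\<lambda>n. (exp (4*lo n) - 1)/(4*g (real n)) \<le> cov M (BB 0) (BB n) / (4 * exp 2 * g (real n) * (Ct * Ct)) \<and>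
      cov M (BB 0) (BB n) / (4 * exp 2 * g (real n) * (Ct * Ct)) \<le> (exp (4*hi n) - 1)/(4*g (real n))) sequentially"
    using N_ev
  proof eventually_elim
    case (elim n)
    have bd: "ennreal (exp (2 + 4*lo n)) * CC 0 * CC (real n) \<le> (\<integral>\<^sup>+\<omega>. aa 0 \<omega> * aa 0 \<omega> * aa (real n) \<omega> * aa (real n) \<omega> \<partial>M) \<and>
        (\<integral>\<^sup>+\<omega>. aa 0 \<omega> * aa 0 \<omega> * aa (real n) \<omega> * aa (real n) \<omega> \<partial>M) \<le> ennreal (exp (2 + 4*hi n)) * CC 0 * CC (real n)"
      by (rule E4bounds) (rule byx[OF elim])
    hence "ennreal (exp (2 + 4*lo n) * Ct * Ct) \<le> (\<integral>\<^sup>+\<omega>. aa 0 \<omega> * aa 0 \<omega> * aa (real n) \<omega> * aa (real n) \<omega> \<partial>M) \<and>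
        (\<integral>\<^sup>+\<omega>. aa 0 \<omega> * aa 0 \<omega> * aa (real n) \<omega> * aa (real n) \<omega> \<partial>M) \<le> ennreal (exp (2 + 4*hi n) * Ct * Ct)"
      using Ct by (simp add: ennreal_mult'[symmetric])
    hence rb: "exp (2 + 4*lo n) * Ct * Ct \<le> enn2real (\<integral>\<^sup>+\<omega>. aa 0 \<omega> * aa 0 \<omega> * aa (real n) \<omega> * aa (real n) \<omega> \<partial>M) \<and>
        enn2real (\<integral>\<^sup>+\<omega>. aa 0 \<omega> * aa 0 \<omega> * aa (real n) \<omega> * aa (real n) \<omega> \<partial>M) \<le> exp (2 + 4*hi n) * Ct * Ct
        \<and> (\<integral>\<^sup>+\<omega>. aa 0 \<omega> * aa 0 \<omega> * aa (real n) \<omega> * aa (real n) \<omega> \<partial>M) < top"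
      by (intro enn_bounds) (use Ct in auto)
    have "(LINT \<omega>|M. BB 0 \<omega> * BB n \<omega>) = (LINT \<omega>|M. enn2real (aa 0 \<omega> * aa 0 \<omega> * aa (real n) \<omega> * aa (real n) \<omega>))"
      by (rule Bochner_Integration.integral_cong) (simp_all add: Aconv BBeq enn2real_mult)
    also have "\<dots> = enn2real (\<integral>\<^sup>+\<omega>. aa 0 \<omega> * aa 0 \<omega> * aa (real n) \<omega> * aa (real n) \<omega> \<partial>M)" by (rule LINT_enn) (use rb in simp_all)
    finally have cv: "cov M (BB 0) (BB n) = enn2real (\<integral>\<^sup>+\<omega>. aa 0 \<omega> * aa 0 \<omega> * aa (real n) \<omega> * aa (real n) \<omega> \<partial>M) - exp 2 * (Ct * Ct)"
      unfolding cov_def using LBB by (simp add: mult_ac flip: exp_add)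
    show ?case
    proof (rule ratio_b)
      show "0 < exp (2::real) * (Ct * Ct)" using Ct by simp
      show "0 < (4::real)" by simp
      show "0 < g (real n)" by (rule gpos[OF elim])
      show "exp 2 * (Ct * Ct) * (exp (4*lo n) - 1) \<le> cov M (BB 0) (BB n)" using rb cv by (simp add: exp_add algebra_simps)
      show "cov M (BB 0) (BB n) \<le> exp 2 * (Ct * Ct) * (exp (4*hi n) - 1)" using rb cv by (simp add: exp_add algebra_simps)
    qed simp
  qed
  show ?thesis
    by (intro conjI asymp_equivI' final[OF _ c1] final[OF _ c2] final[OF _ c3]) simp_all
qed

end

theorem mainTheorem6:
  fixes M :: "'a measure" and B :: "real \<Rightarrow> 'a \<Rightarrow> real" and d c :: real
  assumes "0 < d" "d < 1/2" "c > 0"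
    and "fBm M (1/2 + d) B"
  defines "Z \<equiv> (\<lambda>t \<omega>. B (c*t) \<omega> - B (c*t - 1) \<omega>)"
    and "\<gamma> \<equiv> gammaZ (1/2 + d) c"
  defines "A \<equiv> (\<lambda>(L::nat) \<omega>. LBINT s=real L - 1..real L. exp (Z s \<omega>))"
    and "BB \<equiv> (\<lambda>(L::nat) \<omega>. LBINT s=real L - 1..real L. (LBINT t=real L - 1..real L.
                  exp (Z s \<omega>) * exp (Z t \<omega>)))"
  shows "(\<lambda>L. cov M (A L) (A 0)) \<sim>[at_top] (\<lambda>L. exp 1 * \<gamma> (real L)) \<and>
         (\<lambda>L. cov M (A 0) (BB L)) \<sim>[at_top]
           (\<lambda>L. 2 * exp (3/2) * \<gamma> (real L) *
                (LBINT s=-1..0. (LBINT u=-1..0. exp (\<gamma> (s - u))))) \<and>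
         (\<lambda>L. cov M (BB 0) (BB L)) \<sim>[at_top]
           (\<lambda>L. 4 * exp 2 * \<gamma> (real L) *
                (LBINT s=-1..0. (LBINT t=-1..0. (LBINT u=-1..0. (LBINT v=-1..0.
                    exp (\<gamma> (s - t)) * exp (\<gamma> (u - v)))))))"
proof -
  have fs: "fsetup M B d c" unfolding fsetup_def using assms(1-4) by auto
  have Adef: "A = (\<lambda>L \<omega>. LBINT s=real L - 1..real L. exp (B (c * s) \<omega> - B (c * s - 1) \<omega>))"
    unfolding A_def Z_def ..
  have BBdef: "BB = (\<lambda>L \<omega>. LBINT s=real L - 1..real L. (LBINT t=real L - 1..real L.
                  exp (B (c * s) \<omega> - B (c * s - 1) \<omega>) * exp (B (c * t) \<omega> - B (c * t - 1) \<omega>)))"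
    unfolding BB_def Z_def ..
  note R = fsetup.main_loc[OF fs Adef BBdef]
  note R' = R[folded fsetup.four[OF fs], unfolded fsetup.Ct_def[OF fs] fsetup.g_def[OF fs]]
  show ?thesis unfolding \<gamma>_def using R' .
qed

end
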